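(* Let $t\ge 1$ and let $v_0,\dots,v_{t-1}\in\mathbb{R}$. Let $P_0,\dots,P_{t-1}$ be a $t$-outcome verifier (in the sense of the context). Define \[ v=\sup\Big\{\textstyle\sum_{i=0}^{t-1} v_i\,\langle P_i, X\rangle \;:\; X \text{ a 1-fold strategy}\Big\}, \] and for an integer $n\ge 1$ define \[ v'=\sup\Big\{\textstyle\sum_{i_1,\dots,i_n\in\{0,\dots,t-1\}} \tfrac{1}{n}\,(v_{i_1}+\cdots+v_{i_n})\,\langle P_{i_1}\otimes\cdots\otimes P_{i_n}, X\rangle \;:\; X \text{ an } n\text{-fold strategy}\Big\}. \] Then $v'=v$.
   Context: Fix an integer $r\ge1$ and finite-dimensional complex Hilbert spaces $\mathcal{X}_1,\dots,\mathcal{X}_r$ (questions) and $\mathcal{Y}_1,\dots,\mathcal{Y}_r$ (answers). Write $\mathcal{X}_{1\ldots j}=\mathcal{X}_1\otimes\cdots\otimes\mathcal{X}_j$, similarly $\mathcal{Y}_{1\ldots j}$; tensor products of spaces taken in different orders are implicitly identified via the obvious permutation of factors. $\mathrm{Pos}(\cdot)$ denotes positive semidefinite operators, $\mathrm{D}(\cdot)$ density operators, $\langle A,B\rangle=\mathrm{Tr}(A^*B)$, and $\mathbb{I}$ identities. A $t$-outcome verifier is a tuple $P_0,\dots,P_{t-1}\in\mathrm{Pos}(\mathcal{Y}_{1\ldots r}\otimes\mathcal{X}_{1\ldots r})$ for which there exist $R_1=\rho\in\mathrm{D}(\mathcal{X}_1)$ and $R_j\in\mathrm{Pos}(\mathcal{Y}_{1\ldots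 j-1}\otimes\mathcal{X}_{1\ldots j})$ for $2\le j\le r$ with $\mathrm{Tr}_{\mathcal{X}_{j+1}}(R_{j+1})=\mathbb{I}_{\mathcal{Y}_j}\otimes R_j$ for $1\le j\le r-1$ and $\sum_{i}P_i=\mathbb{I}_{\mathcal{Y}_r}\otimes R_r$. For an integer $n\ge1$, an $n$-fold strategy (for the prover, "Bob") is an operator $X\in\mathrm{Pos}((\mathcal{Y}_{1\ldots r}\otimes\mathcal{X}_{1\ldots r})^{\otimes n})$ for which there exist $X_j\in\mathrm{Pos}(\mathcal{Y}_{1\ldots j}^{\otimes n}\otimes\mathcal{X}_{1\ldots j}^{\otimes n})$, $1\le j\le r$, with $X_r=X$, $\mathrm{Tr}_{\mathcal{Y}_1^{\otimes n}}(X_1)=\mathbb{I}_{\mathcal{X}_1^{\otimes n}}$ and $\mathrm{Tr}_{\mathcal{Y}_j^{\otimes n}}(X_j)=X_{j-1}\otimes\mathbb{I}_{\mathcal{X}_j^{\otimes n}}$ for $2\le j\le r$. (These model $n$ independent parallel copies of an $r$-round quantum interaction; the probability of outcomes $(i_1,\dots,i_n)$ under strategy $X$ is $\langle P_{i_1}\otimes\cdots\otimes P_{i_n},X\rangle$.) *)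

theory Defs
  imports Complex_Main "HOL-Library.FuncSet"
begin

text \<open>Tensor factors carry labels of type 'l; a dimension function d assigns each
  label its dimension. The standard basis of the tensor product of the factors
  in a finite label set S is indexed by functions f with f l < d l on S and
  f l = 0 off S. Operators are matrices indexed by such basis elements.
  Because factors are labelled, tensor products in different orders are
  automatically identified.\<close>

type_synonym 'l op = "('l \<Rightarrow> nat) \<Rightarrow> ('l \<Rightarrow> nat) \<Rightarrow> complex"

definition basis :: "('l \<Rightarrow> nat) \<Rightarrow> 'l set \<Rightarrow> ('l \<Rightarrow> nat) set" where
  "basis d S = {f. (\<forall>l\<in>S. f l < d l) \<and> (\<forall>l. l \<notin> S \<longrightarrow> f l = 0)}"

definition psd :: "('l \<Rightarrow> nat) \<Rightarrow> 'l set \<Rightarrow> 'l op \<Rightarrow> bool" where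
  "psd d S M = (\<forall>v :: ('l \<Rightarrow> nat) \<Rightarrow> complex.
     let q = (\<Sum>a\<in>basis d S. \<Sum>b\<in>basis d S. cnj (v a) * M a b * v b)
     in Im q = 0 \<and> 0 \<le> Re q)"

definition op_eq :: "('l \<Rightarrow> nat) \<Rightarrow> 'l set \<Rightarrow> 'l op \<Rightarrow> 'l op \<Rightarrow> bool" where
  "op_eq d S M N = (\<forall>a\<in>basis d S. \<forall>b\<in>basis d S. M a b = N a b)"

definition tr :: "('l \<Rightarrow> nat) \<Rightarrow> 'l set \<Rightarrow> 'l op \<Rightarrow> complex" where
  "tr d S M = (\<Sum>a\<in>basis d S. M a a)"

definition inner_op :: "('l \<Rightarrow> nat) \<Rightarrow> 'l set \<Rightarrow> 'l op \<Rightarrow> 'l op \<Rightarrow> complex" where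
  "inner_op d S A B = (\<Sum>a\<in>basis d S. \<Sum>b\<in>basis d S. cnj (A a b) * B a b)"

definition join :: "'l set \<Rightarrow> ('l \<Rightarrow> nat) \<Rightarrow> ('l \<Rightarrow> nat) \<Rightarrow> ('l \<Rightarrow> nat)" where
  "join T a c = (\<lambda>l. if l \<in> T then c l else a l)"

definition zero_on :: "'l set \<Rightarrow> ('l \<Rightarrow> nat) \<Rightarrow> ('l \<Rightarrow> nat)" where
  "zero_on T a = (\<lambda>l. if l \<in> T then 0 else a l)"

definition ptrace :: "('l \<Rightarrow> nat) \<Rightarrow> 'l set \<Rightarrow> 'l op \<Rightarrow> 'l op" where
  "ptrace d T M = (\<lambda>a b. \<Sum>c\<in>basis d T. M (join T a c) (join T b c))"

definition idop :: "'l set \<Rightarrow> 'l op" where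
  "idop T = (\<lambda>a b. if (\<forall>l\<in>T. a l = b l) then 1 else 0)"

definition ident_tensor :: "'l set \<Rightarrow> 'l op \<Rightarrow> 'l op" where
  "ident_tensor T M = (\<lambda>a b. idop T a b * M (zero_on T a) (zero_on T b))"

text \<open>Concrete labels for the interaction: (copy k, round j, isAnswer).
  Label (k,j,False) is the k-th copy of X_j, (k,j,True) the k-th copy of Y_j.\<close>
type_synonym lab = "nat \<times> nat \<times> bool"

definition dimf :: "(nat \<Rightarrow> nat) \<Rightarrow> (nat \<Rightarrow> nat) \<Rightarrow> lab \<Rightarrow> nat" where
  "dimf dx dy = (\<lambda>(k, j, b). if b then dy j else dx j)"

definition Lab :: "nat \<Rightarrow> nat \<Rightarrow> lab set" where
  "Lab n j = {(k, j', b). k < n \<and> 1 \<le> j' \<and> j' \<le> j}"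

definition Ylab :: "nat \<Rightarrow> nat \<Rightarrow> lab set" where
  "Ylab n j = {(k, j', b). k < n \<and> j' = j \<and> b}"

definition Xlab :: "nat \<Rightarrow> nat \<Rightarrow> lab set" where
  "Xlab n j = {(k, j', b). k < n \<and> j' = j \<and> \<not> b}"

text \<open>Y_{1..j-1} (x) X_{1..j} (single copy)\<close>
definition RL :: "nat \<Rightarrow> lab set" where
  "RL j = {(k, j', b). k = 0 \<and> 1 \<le> j' \<and> (if b then j' < j else j' \<le> j)}"

definition verifier :: "(lab \<Rightarrow> nat) \<Rightarrow> nat \<Rightarrow> nat \<Rightarrow> (nat \<Rightarrow> lab op) \<Rightarrow> bool" where
  "verifier d r t P =
    ((\<forall>i<t. psd d (Lab 1 r) (P i)) \<and>
     (\<exists>R :: nat \<Rightarrow> lab op.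
        psd d (Xlab 1 1) (R 1) \<and> tr d (Xlab 1 1) (R 1) = 1 \<and>
        (\<forall>j\<in>{2..r}. psd d (RL j) (R j)) \<and>
        (\<forall>j\<in>{1..r-1}. op_eq d (RL j \<union> Ylab 1 j)
            (ptrace d (Xlab 1 (j+1)) (R (j+1))) (ident_tensor (Ylab 1 j) (R j))) \<and>
        op_eq d (Lab 1 r) (\<lambda>a b. \<Sum>i<t. P i a b) (ident_tensor (Ylab 1 r) (R r))))"

definition strategy :: "(lab \<Rightarrow> nat) \<Rightarrow> nat \<Rightarrow> nat \<Rightarrow> lab op \<Rightarrow> bool" where
  "strategy d r n X =
    (psd d (Lab n r) X \<and>
     (\<exists>Xs :: nat \<Rightarrow> lab op.
        (\<forall>j\<in>{1..r}. psd d (Lab n j) (Xs j)) \<and>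
        op_eq d (Lab n r) (Xs r) X \<and>
        op_eq d (Xlab n 1) (ptrace d (Ylab n 1) (Xs 1)) (idop (Xlab n 1)) \<and>
        (\<forall>j\<in>{2..r}. op_eq d (Lab n j - Ylab n j)
            (ptrace d (Ylab n j) (Xs j)) (ident_tensor (Xlab n j) (Xs (j-1))))))"

definition loc :: "nat \<Rightarrow> (lab \<Rightarrow> nat) \<Rightarrow> (lab \<Rightarrow> nat)" where
  "loc k a = (\<lambda>(c, j, b). if c = 0 then a (k, j, b) else 0)"

definition tensor_copies :: "nat \<Rightarrow> (nat \<Rightarrow> lab op) \<Rightarrow> lab op" where
  "tensor_copies n Q = (\<lambda>a b. \<Prod>k<n. Q k (loc k a) (loc k b))"

end

theory Submission
  imports Defs "HOL-Library.FuncSet"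
begin

definition restr :: "'l set \<Rightarrow> ('l \<Rightarrow> nat) \<Rightarrow> ('l \<Rightarrow> nat)" where
  "restr S a = (\<lambda>l. if l \<in> S then a l else 0)"

lemma finite_basis: "finite S \<Longrightarrow> finite (basis d S)"
proof -
  assume S: "finite S"
  have "basis d S \<subseteq> {f. \<forall>x. (x \<in> S \<longrightarrow> f x \<in> insert 0 (\<Union>l\<in>S. {..<d l})) \<and> (x \<notin> S \<longrightarrow> f x = 0)}"
    unfolding basis_def by auto
  moreover have "finite \<dots>" using S by (intro finite_set_of_finite_funs) auto
  ultimately show ?thesis by (rule finite_subset)
qed

lemma basis_zero: "a \<in> basis d S \<Longrightarrow> l \<notin> S \<Longrightarrow> a l = 0"
  by (simp add: basis_def)

lemma join_in: "S \<inter> T = {} \<Longrightarrow> a \<in> basis d S \<Longrightarrow> c \<in> basis d T \<Longrightarrow> join T a c \<in> basis d (S \<union> T)"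
  by (auto simp: basis_def join_def)

lemma restr_join1: "a \<in> basis d S \<Longrightarrow> S \<inter> T = {} \<Longrightarrow> restr S (join T a c) = a"
  by (auto simp: basis_def join_def restr_def fun_eq_iff)

lemma restr_join2: "c \<in> basis d T \<Longrightarrow> restr T (join T a c) = c"
  by (auto simp: basis_def join_def restr_def fun_eq_iff)

lemma join_restr: "x \<in> basis d (S \<union> T) \<Longrightarrow> join T (restr S x) (restr T x) = x"
  by (auto simp: basis_def join_def restr_def fun_eq_iff)

lemma restr_in: "x \<in> basis d (S \<union> T) \<Longrightarrow> restr S x \<in> basis d S"
  by (auto simp: basis_def restr_def)

lemma restr_in': "x \<in> basis d S' \<Longrightarrow> S' \<inter> U = S \<Longrightarrow> restr U x \<in> basis d S"
  by (auto simp: basis_def restr_def)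

lemma restr_basis_id: "x \<in> basis d S \<Longrightarrow> S \<subseteq> U \<Longrightarrow> restr U x = x"
  by (auto simp: basis_def restr_def fun_eq_iff)

lemma sum_split:
  assumes "finite S" "finite T" "S \<inter> T = {}"
  shows "(\<Sum>x\<in>basis d (S \<union> T). f x) = (\<Sum>a\<in>basis d S. \<Sum>c\<in>basis d T. f (join T a c))"
proof -
  have bij: "bij_betw (\<lambda>(a,c). join T a c) (basis d S \<times> basis d T) (basis d (S \<union> T))"
    apply (rule bij_betw_byWitness[where f'="\<lambda>x. (restr S x, restr T x)"])
    using assms by (auto simp: restr_join1 restr_join2 join_restr join_in restr_in
        intro: restr_in[of _ d T S, simplified Un_commute])
  have "(\<Sum>a\<in>basis d S. \<Sum>c\<in>basis d T. f (join T a c)) = (\<Sum>(a,c)\<in>basis d S \<times> basis d T. f (join T a c))"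
    by (rule sum.cartesian_product)
  also have "\<dots> = (\<Sum>x\<in>basis d (S \<union> T). f x)"
    using sum.reindex_bij_betw[OF bij, of f] by (simp add: case_prod_unfold)
  finally show ?thesis by simp
qed


definition nonneg :: "complex \<Rightarrow> bool" where
  "nonneg z \<longleftrightarrow> Im z = 0 \<and> 0 \<le> Re z"

definition qf :: "'a set \<Rightarrow> ('a \<Rightarrow> 'a \<Rightarrow> complex) \<Rightarrow> ('a \<Rightarrow> complex) \<Rightarrow> complex" where
  "qf I M v = (\<Sum>a\<in>I. \<Sum>b\<in>I. cnj (v a) * M a b * v b)"

definition psdI :: "'a set \<Rightarrow> ('a \<Rightarrow> 'a \<Rightarrow> complex) \<Rightarrow> bool" where
  "psdI I M \<longleftrightarrow> (\<forall>v. nonneg (qf I M v))"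

lemma psd_psdI: "psd d S M \<longleftrightarrow> psdI (basis d S) M"
  by (simp add: psd_def psdI_def qf_def nonneg_def Let_def)

lemma nonneg_sum: "(\<And>x. x \<in> A \<Longrightarrow> nonneg (f x)) \<Longrightarrow> nonneg (sum f A)"
  by (auto simp: nonneg_def Im_sum Re_sum intro: sum_nonneg)

lemma nonneg_add: "nonneg a \<Longrightarrow> nonneg b \<Longrightarrow> nonneg (a + b)"
  by (auto simp: nonneg_def)

lemma nonneg_cnj_mult: "nonneg (cnj z * z)"
  by (simp add: nonneg_def)

lemma qf_supp:
  assumes "finite I" "K \<subseteq> I" "\<And>x. x \<notin> K \<Longrightarrow> v x = 0"
  shows "qf I M v = qf K M v"
proof -
  have "qf I M v = (\<Sum>a\<in>I. \<Sum>b\<in>K. cnj (v a) * M a b * v b)"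
    unfolding qf_def by (intro sum.cong refl sum.mono_neutral_right) (use assms in auto)
  also have "\<dots> = qf K M v"
    unfolding qf_def by (intro sum.mono_neutral_right) (use assms in auto)
  finally show ?thesis .
qed

lemma psdI_sub:
  assumes "finite J" "I \<subseteq> J" "psdI J M" shows "psdI I M"
  unfolding psdI_def
proof
  fix v
  have "qf J M (\<lambda>a. if a \<in> I then v a else 0) = qf I M (\<lambda>a. if a \<in> I then v a else 0)"
    by (rule qf_supp) (use assms in auto)
  also have "\<dots> = qf I M v" by (simp add: qf_def)
  finally show "nonneg (qf I M v)" using assms(3) unfolding psdI_def by metis
qed

lemma qf_two:
  assumes "finite I" "a \<in> I" "b \<in> I" "a \<noteq> b"
  shows "qf I M (\<lambda>z. if z = a then s else if z = b then t else 0)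
       = cnj s * M a a * s + cnj s * M a b * t + cnj t * M b a * s + cnj t * M b b * t"
proof -
  have "qf I M (\<lambda>z. if z = a then s else if z = b then t else 0)
      = qf {a,b} M (\<lambda>z. if z = a then s else if z = b then t else 0)"
    by (rule qf_supp) (use assms in auto)
  then show ?thesis using assms by (simp add: qf_def algebra_simps)
qed

lemma qf_one:
  assumes "finite I" "a \<in> I"
  shows "qf I M (\<lambda>z. if z = a then 1 else 0) = M a a"
proof -
  have "qf I M (\<lambda>z. if z = a then 1 else 0) = qf {a} M (\<lambda>z. if z = a then 1 else 0)"
    by (rule qf_supp) (use assms in auto)
  then show ?thesis by (simp add: qf_def)
qed

lemma psdI_diag: "finite I \<Longrightarrow> psdI I M \<Longrightarrow> a \<in> I \<Longrightarrow> nonneg (M a a)"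
  using qf_one[of I a M] unfolding psdI_def by metis

lemma psdI_herm:
  assumes "finite I" "psdI I M" "a \<in> I" "b \<in> I"
  shows "M a b = cnj (M b a)"
proof (cases "a = b")
  case True
  then show ?thesis using psdI_diag[OF assms(1,2,3)] by (simp add: nonneg_def complex_eq_iff)
next
  case False
  have 1: "nonneg (qf I M (\<lambda>z. if z = a then 1 else if z = b then 1 else 0))"
    using assms unfolding psdI_def by blast
  have 2: "nonneg (qf I M (\<lambda>z. if z = a then 1 else if z = b then \<i> else 0))"
    using assms unfolding psdI_def by blast
  have da: "Im (M a a) = 0" and db: "Im (M b b) = 0"
    using psdI_diag[OF assms(1,2)] assms(3,4) by (auto simp: nonneg_def)
  from 1 have "Im (M a b) + Im (M b a) = 0"
    by (simp add: qf_two[OF assms(1,3,4) False] nonneg_def da db)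
  moreover from 2 have "Re (M a b) - Re (M b a) = 0"
    by (simp add: qf_two[OF assms(1,3,4) False] nonneg_def da db)
  ultimately show ?thesis by (simp add: complex_eq_iff)
qed

lemma psdI_zero_row:
  assumes "finite I" "psdI I M" "a \<in> I" "b \<in> I" "M a a = 0"
  shows "M a b = 0"
proof (rule ccontr)
  assume m: "M a b \<noteq> 0"
  then have ab: "a \<noteq> b" using assms by auto
  define m where "m = M a b"
  have h: "M b a = cnj m" using psdI_herm[OF assms(1,2,4,3)] m_def by simp
  have db: "Im (M b b) = 0" using psdI_diag[OF assms(1,2,4)] by (simp add: nonneg_def)
  define n2 where "n2 = (cmod m)^2"
  have n2: "n2 > 0" using m m_def n2_def by simp
  define t where "t = (Re (M b b) + 1) / (2 * n2)"
  define s where "s = - complex_of_real t * m"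
  have "nonneg (qf I M (\<lambda>z. if z = a then s else if z = b then 1 else 0))"
    using assms unfolding psdI_def by blast
  then have "0 \<le> Re (cnj s * m + cnj m * s + M b b)"
    by (simp add: qf_two[OF assms(1,3,4) ab] assms(5) h m_def[symmetric] nonneg_def)
  also have "cnj s * m + cnj m * s = - complex_of_real (2 * t * n2)"
    unfolding s_def n2_def using complex_norm_square[of m] by (simp add: algebra_simps)
  also have "2 * t * n2 = Re (M b b) + 1" using n2 unfolding t_def by simp
  finally show False by simp
qed


lemma sum_if_const: "(\<Sum>b\<in>B. if P then f b else 0) = (if P then (\<Sum>b\<in>B. f b) else 0)"
  by simp

lemma qf_pert:
  assumes "finite J" "x \<in> J"
  shows "qf J M (\<lambda>a. v a + (if a = x then \<tau> else 0)) = qf J M v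
     + \<tau> * (\<Sum>a\<in>J. cnj (v a) * M a x) + cnj \<tau> * (\<Sum>b\<in>J. M x b * v b) + cnj \<tau> * M x x * \<tau>"
proof -
  have pt: "\<And>a b. cnj (v a + (if a = x then \<tau> else 0)) * M a b * (v b + (if b = x then \<tau> else 0))
     = cnj (v a) * M a b * v b + (if b = x then cnj (v a) * M a b * \<tau> else 0)
       + ((if a = x then cnj \<tau> * M a b * v b else 0) + (if a = x then (if b = x then cnj \<tau> * M a b * \<tau> else 0) else 0))"
    by (auto simp: algebra_simps)
  show ?thesis
    unfolding qf_def pt
    using assms by (simp add: sum.distrib sum_distrib_left sum_if_const ac_simps)
qed

lemma qf_sub_rank1:
  "qf J (\<lambda>a b. M a b - u a * cnj (u b)) v = qf J M v - (\<Sum>a\<in>J. cnj (v a) * u a) * (\<Sum>b\<in>J. cnj (u b) * v b)"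
proof -
  have "qf J (\<lambda>a b. M a b - u a * cnj (u b)) v = qf J M v - (\<Sum>a\<in>J. \<Sum>b\<in>J. (cnj (v a) * u a) * (cnj (u b) * v b))"
    unfolding qf_def by (simp add: algebra_simps sum_subtractf)
  also have "(\<Sum>a\<in>J. \<Sum>b\<in>J. (cnj (v a) * u a) * (cnj (u b) * v b)) = (\<Sum>a\<in>J. cnj (v a) * u a) * (\<Sum>b\<in>J. cnj (u b) * v b)"
    by (simp add: sum_product)
  finally show ?thesis .
qed

lemma gram:
  assumes "finite I" "psdI I M"
  shows "\<exists>N w. \<forall>a\<in>I. \<forall>b\<in>I. M a b = (\<Sum>m<(N::nat). w m a * cnj (w m b))"
  using assms
proof (induction I arbitrary: M rule: finite_induct)
  case empty
  then show ?case by auto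
next
  case (insert x I)
  let ?J = "insert x I"
  have fJ: "finite ?J" using insert by simp
  have zc: "\<exists>N w. \<forall>a\<in>?J. \<forall>b\<in>?J. M' a b = (\<Sum>m<(N::nat). w m a * cnj (w m b))"
    if p: "psdI ?J M'" and z: "M' x x = 0" for M'
  proof -
    have row: "M' x b = 0" if "b \<in> ?J" for b using psdI_zero_row[OF fJ p _ that z] by simp
    have col: "M' a x = 0" if "a \<in> ?J" for a using psdI_herm[OF fJ p that, of x] row[of a] that by simp
    have "psdI I M'" by (rule psdI_sub[OF fJ _ p]) auto
    from insert.IH[OF this] obtain N w where w: "\<forall>a\<in>I. \<forall>b\<in>I. M' a b = (\<Sum>m<(N::nat). w m a * cnj (w m b))"
      by blast
    show ?thesis
    proof (intro exI ballI)
      fix a b assume ab: "a \<in> ?J" "b \<in> ?J"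
      show "M' a b = (\<Sum>m<N. (\<lambda>m a. if a = x then 0 else w m a) m a * cnj ((\<lambda>m a. if a = x then 0 else w m a) m b))"
      proof (cases "a = x \<or> b = x")
        case True then show ?thesis using ab row col by auto
      next
        case False then have "a \<in> I" "b \<in> I" "a \<noteq> x" "b \<noteq> x" using ab by auto
        then show ?thesis using w by simp
      qed
    qed
  qed
  have px: "nonneg (M x x)" using psdI_diag[OF fJ insert.prems] by simp
  define \<alpha> where "\<alpha> = Re (M x x)"
  have Mxx: "M x x = complex_of_real \<alpha>" using px unfolding \<alpha>_def nonneg_def by (simp add: complex_eq_iff)
  have a0: "\<alpha> \<ge> 0" using px unfolding \<alpha>_def nonneg_def by simp
  show ?case
  proof (cases "\<alpha> = 0")
    case True
    then show ?thesis using zc[OF insert.prems] Mxx by simp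
  next
    case False
    with a0 have apos: "\<alpha> > 0" by simp
    define sa where "sa = complex_of_real (sqrt \<alpha>)"
    have sa2: "sa * sa = complex_of_real \<alpha>" unfolding sa_def of_real_mult[symmetric] using a0 by simp
    have sa0: "sa \<noteq> 0" unfolding sa_def using apos by simp
    have csa: "cnj sa = sa" unfolding sa_def by simp
    define u where "u a = M a x / sa" for a
    define M' where "M' a b = M a b - u a * cnj (u b)" for a b
    have herm: "M a b = cnj (M b a)" if "a \<in> ?J" "b \<in> ?J" for a b
      using psdI_herm[OF fJ insert.prems that] .
    have pM': "psdI ?J M'"
      unfolding psdI_def
    proof
      fix v
      define s where "s = (\<Sum>b\<in>?J. M x b * v b)"
      define \<tau> where "\<tau> = - s / complex_of_real \<alpha>"
      have c1: "(\<Sum>a\<in>?J. cnj (v a) * M a x) = cnj s"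
      proof -
        have "(\<Sum>a\<in>?J. cnj (v a) * M a x) = (\<Sum>a\<in>?J. cnj (M x a * v a))"
        proof (rule sum.cong[OF refl])
          fix a assume "a \<in> ?J"
          then have "M a x = cnj (M x a)" by (rule herm) simp
          then show "cnj (v a) * M a x = cnj (M x a * v a)" by simp
        qed
        then show ?thesis unfolding s_def by simp
      qed
      have c2: "(\<Sum>a\<in>?J. cnj (v a) * u a) = cnj s / sa"
      proof -
        have "(\<Sum>a\<in>?J. cnj (v a) * u a) = (\<Sum>a\<in>?J. cnj (v a) * M a x) / sa"
          unfolding u_def by (simp add: sum_divide_distrib)
        then show ?thesis using c1 by simp
      qed
      have c3: "(\<Sum>b\<in>?J. cnj (u b) * v b) = s / sa"
      proof -
        have "(\<Sum>b\<in>?J. cnj (u b) * v b) = (\<Sum>b\<in>?J. M x b * v b / sa)"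
        proof (rule sum.cong[OF refl])
          fix b assume "b \<in> ?J"
          then have "M x b = cnj (M b x)" by (intro herm) simp_all
          then show "cnj (u b) * v b = M x b * v b / sa" unfolding u_def using csa by simp
        qed
        then show ?thesis unfolding s_def by (simp add: sum_divide_distrib)
      qed
      have "qf ?J M' v = qf ?J M v - cnj s / sa * (s / sa)"
        unfolding M'_def qf_sub_rank1 c2 c3 by simp
      also have "\<dots> = qf ?J M v - cnj s * s / complex_of_real \<alpha>"
        by (simp add: sa2[symmetric])
      also have "\<dots> = qf ?J M (\<lambda>a. v a + (if a = x then \<tau> else 0))"
      proof -
        have ct: "cnj \<tau> = - cnj s / complex_of_real \<alpha>" by (simp add: \<tau>_def)
        have a0': "complex_of_real \<alpha> \<noteq> 0" using apos by simp
        show ?thesis unfolding qf_pert[OF fJ insertI1] c1 Mxx s_def[symmetric] ct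
          unfolding \<tau>_def using a0' by (simp add: field_simps)
      qed
      finally show "nonneg (qf ?J M' v)" using insert.prems unfolding psdI_def by simp
    qed
    have "M' x x = 0"
    proof -
      have "M' x x = complex_of_real \<alpha> - (complex_of_real \<alpha> / sa) * (complex_of_real \<alpha> / sa)"
        unfolding M'_def u_def Mxx using csa by simp
      also have "\<dots> = 0" using sa0 apos by (simp add: sa2[symmetric] field_simps)
      finally show ?thesis .
    qed
    from zc[OF pM' this] obtain N w where w: "\<forall>a\<in>?J. \<forall>b\<in>?J. M' a b = (\<Sum>m<(N::nat). w m a * cnj (w m b))"
      by blast
    show ?thesis
    proof (intro exI ballI)
      fix a b assume ab: "a \<in> ?J" "b \<in> ?J"
      have "M a b = M' a b + u a * cnj (u b)" unfolding M'_def by simp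
      also have "\<dots> = (\<Sum>m<Suc N. (w(N := u)) m a * cnj ((w(N := u)) m b))"
        using w ab by auto
      finally show "M a b = (\<Sum>m<Suc N. (w(N := u)) m a * cnj ((w(N := u)) m b))" .
    qed
  qed
qed


definition red :: "('l \<Rightarrow> nat) \<Rightarrow> 'l set \<Rightarrow> 'l op \<Rightarrow> 'l op \<Rightarrow> 'l op" where
  "red d S Q X = (\<lambda>a b. \<Sum>c\<in>basis d S. \<Sum>e\<in>basis d S. cnj (Q c e) * X (join S a c) (join S b e))"

definition tens :: "'l set \<Rightarrow> 'l op \<Rightarrow> 'l op \<Rightarrow> 'l op" where
  "tens U A B = (\<lambda>a b. A (restr U a) (restr U b) * B (restr (-U) a) (restr (-U) b))"

lemma sum_swap_mid: "(\<Sum>a\<in>A. \<Sum>c\<in>C. \<Sum>b\<in>B. f a c b) = (\<Sum>a\<in>A. \<Sum>b\<in>B. \<Sum>c\<in>C. f a c b)"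
  by (rule sum.cong[OF refl], rule sum.swap)

lemma sum_swap3: "(\<Sum>a\<in>A. \<Sum>b\<in>B. \<Sum>m\<in>M. f a b m) = (\<Sum>m\<in>M. \<Sum>a\<in>A. \<Sum>b\<in>B. f a b m)"
proof -
  have "(\<Sum>a\<in>A. \<Sum>b\<in>B. \<Sum>m\<in>M. f a b m) = (\<Sum>a\<in>A. \<Sum>m\<in>M. \<Sum>b\<in>B. f a b m)"
    by (rule sum.cong[OF refl], rule sum.swap)
  also have "\<dots> = (\<Sum>m\<in>M. \<Sum>a\<in>A. \<Sum>b\<in>B. f a b m)" by (rule sum.swap)
  finally show ?thesis .
qed

lemma psdI_cong: "(\<And>a b. a \<in> I \<Longrightarrow> b \<in> I \<Longrightarrow> M a b = M' a b) \<Longrightarrow> psdI I M \<longleftrightarrow> psdI I M'"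
  unfolding psdI_def qf_def by (simp cong: sum.cong)

lemma qf_sum: "qf I (\<lambda>a b. \<Sum>m\<in>K. F m a b) v = (\<Sum>m\<in>K. qf I (F m) v)"
proof -
  have "qf I (\<lambda>a b. \<Sum>m\<in>K. F m a b) v = (\<Sum>a\<in>I. \<Sum>b\<in>I. \<Sum>m\<in>K. cnj (v a) * F m a b * v b)"
    unfolding qf_def by (simp add: sum_distrib_left sum_distrib_right)
  also have "\<dots> = (\<Sum>m\<in>K. qf I (F m) v)" unfolding qf_def by (rule sum_swap3)
  finally show ?thesis .
qed

lemma psdI_sum: "(\<And>m. m \<in> K \<Longrightarrow> psdI I (F m)) \<Longrightarrow> psdI I (\<lambda>a b. \<Sum>m\<in>K. F m a b)"
  unfolding psdI_def qf_sum by (auto intro: nonneg_sum)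

lemma psdI_gram_cong:
  assumes "finite I" "psdI I M"
    and "\<And>w. psdI J (P (\<lambda>c e. w c * cnj (w e)))"
    and "\<And>Q Q'. (\<And>c e. c \<in> I \<Longrightarrow> e \<in> I \<Longrightarrow> Q c e = Q' c e) \<Longrightarrow> (\<forall>a\<in>J. \<forall>b\<in>J. P Q a b = P Q' a b)"
    and "\<And>F (K::nat set). finite K \<Longrightarrow> \<forall>a b. P (\<lambda>c e. \<Sum>m\<in>K. F m c e) a b = (\<Sum>m\<in>K. P (F m) a b)"
  shows "psdI J (P M)"
proof -
  obtain N w where w: "\<forall>a\<in>I. \<forall>b\<in>I. M a b = (\<Sum>m<(N::nat). w m a * cnj (w m b))"
    using gram[OF assms(1,2)] by blast
  have "\<forall>a\<in>J. \<forall>b\<in>J. P M a b = P (\<lambda>c e. \<Sum>m<N. w m c * cnj (w m e)) a b"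
    by (rule assms(4)) (use w in auto)
  moreover have "\<forall>a b. P (\<lambda>c e. \<Sum>m<N. w m c * cnj (w m e)) a b = (\<Sum>m<N. P (\<lambda>c e. w m c * cnj (w m e)) a b)"
    using assms(5)[of "{..<N}" "\<lambda>m c e. w m c * cnj (w m e)"] by simp
  ultimately have "\<forall>a\<in>J. \<forall>b\<in>J. P M a b = (\<lambda>a b. \<Sum>m<N. P (\<lambda>c e. w m c * cnj (w m e)) a b) a b" by auto
  then have "psdI J (P M) \<longleftrightarrow> psdI J (\<lambda>a b. \<Sum>m<N. P (\<lambda>c e. w m c * cnj (w m e)) a b)"
    by (intro psdI_cong) auto
  then show ?thesis using assms(3) by (simp add: psdI_sum)
qed

lemma restr_join_U1: "a \<in> basis d S1 \<Longrightarrow> c \<in> basis d S2 \<Longrightarrow> S1 \<subseteq> U \<Longrightarrow> S2 \<inter> U = {} \<Longrightarrow> restr U (join S2 a c) = a"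
  by (auto simp: basis_def restr_def join_def fun_eq_iff)

lemma restr_join_U2: "a \<in> basis d S1 \<Longrightarrow> c \<in> basis d S2 \<Longrightarrow> S1 \<subseteq> U \<Longrightarrow> S2 \<inter> U = {} \<Longrightarrow> restr (-U) (join S2 a c) = c"
  by (auto simp: basis_def restr_def join_def fun_eq_iff)

lemma restr_in_U1: "a \<in> basis d (S1 \<union> S2) \<Longrightarrow> S1 \<subseteq> U \<Longrightarrow> S2 \<inter> U = {} \<Longrightarrow> restr U a \<in> basis d S1"
  by (auto simp: basis_def restr_def)

lemma restr_in_U2: "a \<in> basis d (S1 \<union> S2) \<Longrightarrow> S1 \<subseteq> U \<Longrightarrow> S2 \<inter> U = {} \<Longrightarrow> restr (-U) a \<in> basis d S2"
  by (auto simp: basis_def restr_def)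

lemma qf_split:
  assumes "finite S" "finite T" "S \<inter> T = {}"
  shows "qf (basis d (S \<union> T)) X z = (\<Sum>a\<in>basis d S. \<Sum>b\<in>basis d S. \<Sum>c\<in>basis d T. \<Sum>e\<in>basis d T.
           cnj (z (join T a c)) * X (join T a c) (join T b e) * z (join T b e))"
proof -
  have "qf (basis d (S \<union> T)) X z = (\<Sum>a\<in>basis d S. \<Sum>c\<in>basis d T. \<Sum>b\<in>basis d S. \<Sum>e\<in>basis d T.
           cnj (z (join T a c)) * X (join T a c) (join T b e) * z (join T b e))"
    unfolding qf_def sum_split[OF assms] ..
  also have "\<dots> = (\<Sum>a\<in>basis d S. \<Sum>b\<in>basis d S. \<Sum>c\<in>basis d T. \<Sum>e\<in>basis d T.
           cnj (z (join T a c)) * X (join T a c) (join T b e) * z (join T b e))"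
    by (rule sum_swap_mid)
  finally show ?thesis .
qed

lemma psd_red:
  assumes f: "finite S1" "finite S2" "S1 \<inter> S2 = {}" and X: "psd d (S1 \<union> S2) X" and Q: "psd d S2 Q"
  shows "psd d S1 (red d S2 Q X)"
  unfolding psd_psdI
proof (rule psdI_gram_cong[where P="\<lambda>Q. red d S2 Q X"])
  show "finite (basis d S2)" using f by (simp add: finite_basis)
  show "psdI (basis d S2) Q" using Q by (simp add: psd_psdI)
  show "\<forall>a\<in>basis d S1. \<forall>b\<in>basis d S1. red d S2 Q1 X a b = red d S2 Q2 X a b"
    if "\<And>c e. c \<in> basis d S2 \<Longrightarrow> e \<in> basis d S2 \<Longrightarrow> Q1 c e = Q2 c e" for Q1 Q2
    using that by (simp add: red_def)
  show "\<forall>a b. red d S2 (\<lambda>c e. \<Sum>m\<in>K. F m c e) X a b = (\<Sum>m\<in>K. red d S2 (F m) X a b)" for F and K :: "nat set"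
  proof (intro allI)
    fix a b
    have "red d S2 (\<lambda>c e. \<Sum>m\<in>K. F m c e) X a b = (\<Sum>c\<in>basis d S2. \<Sum>e\<in>basis d S2. \<Sum>m\<in>K. cnj (F m c e) * X (join S2 a c) (join S2 b e))"
      unfolding red_def by (simp add: sum_distrib_right)
    also have "\<dots> = (\<Sum>m\<in>K. red d S2 (F m) X a b)" unfolding red_def by (rule sum_swap3)
    finally show "red d S2 (\<lambda>c e. \<Sum>m\<in>K. F m c e) X a b = (\<Sum>m\<in>K. red d S2 (F m) X a b)" .
  qed
  show "psdI (basis d S1) (red d S2 (\<lambda>c e. w c * cnj (w e)) X)" for w
    unfolding psdI_def
  proof
    fix v
    define z where "z x = v (restr S1 x) * w (restr S2 x)" for x
    have "qf (basis d S1) (red d S2 (\<lambda>c e. w c * cnj (w e)) X) v = qf (basis d (S1 \<union> S2)) X z"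
      unfolding qf_split[OF f] unfolding qf_def red_def
      by (intro sum.cong refl) (simp add: z_def restr_join1 restr_join2 f sum_distrib_left sum_distrib_right ac_simps)
    then show "nonneg (qf (basis d S1) (red d S2 (\<lambda>c e. w c * cnj (w e)) X) v)"
      using X unfolding psd_psdI psdI_def by simp
  qed
qed

lemma psd_tens:
  assumes f: "finite S1" "finite S2" "S1 \<inter> S2 = {}" and U: "S1 \<subseteq> U" "S2 \<inter> U = {}"
    and A: "psd d S1 A" and B: "psd d S2 B"
  shows "psd d (S1 \<union> S2) (tens U A B)"
  unfolding psd_psdI
proof (rule psdI_gram_cong[where P="\<lambda>B. tens U A B"])
  show "finite (basis d S2)" using f by (simp add: finite_basis)
  show "psdI (basis d S2) B" using B by (simp add: psd_psdI)
  show "\<forall>a\<in>basis d (S1 \<union> S2). \<forall>b\<in>basis d (S1 \<union> S2). tens U A Q1 a b = tens U A Q2 a b"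
    if "\<And>c e. c \<in> basis d S2 \<Longrightarrow> e \<in> basis d S2 \<Longrightarrow> Q1 c e = Q2 c e" for Q1 Q2
    using that U by (auto simp: tens_def restr_in_U2)
  show "\<forall>a b. tens U A (\<lambda>c e. \<Sum>m\<in>K. F m c e) a b = (\<Sum>m\<in>K. tens U A (F m) a b)" for F and K :: "nat set"
    unfolding tens_def by (simp add: sum_distrib_left)
  show "psdI (basis d (S1 \<union> S2)) (tens U A (\<lambda>c e. w c * cnj (w e)))" for w
    unfolding psdI_def
  proof
    fix v
    define z where "z a = (\<Sum>e\<in>basis d S2. cnj (w e) * v (join S2 a e))" for a
    have "qf (basis d (S1 \<union> S2)) (tens U A (\<lambda>c e. w c * cnj (w e))) v = qf (basis d S1) A z"
      unfolding qf_split[OF f] unfolding qf_def z_def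
      by (intro sum.cong refl) (simp add: tens_def restr_join_U1 restr_join_U2 U sum_distrib_left sum_distrib_right ac_simps)
    then show "nonneg (qf (basis d (S1 \<union> S2)) (tens U A (\<lambda>c e. w c * cnj (w e))) v)"
      using A unfolding psd_psdI psdI_def by simp
  qed
qed


lemma idop_basis: "a \<in> basis d T \<Longrightarrow> b \<in> basis d T \<Longrightarrow> idop T a b = (if a = b then 1 else 0)"
  by (auto simp: idop_def basis_def fun_eq_iff)

lemma sum_if_eq1: "finite A \<Longrightarrow> x \<in> A \<Longrightarrow> (\<Sum>y\<in>A. (if x = y then 1 else 0) * g y) = (g x :: 'b::comm_ring_1)"
proof -
  assume "finite A" "x \<in> A"
  have "(\<lambda>y. (if x = y then 1 else 0) * g y) = (\<lambda>y. if x = y then g y else 0)" by auto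
  then show ?thesis unfolding \<open>(\<lambda>y. (if x = y then 1 else 0) * g y) = _\<close>
    using \<open>finite A\<close> \<open>x \<in> A\<close> by simp
qed

lemma cnj_if01: "cnj (if c then 1 else 0) = (if c then 1 else 0)" by simp

lemma sum_if_eq2: "finite A \<Longrightarrow> x \<in> A \<Longrightarrow> (\<Sum>y\<in>A. g y * (if x = y then 1 else 0)) = (g x :: 'b::comm_ring_1)"
  using sum_if_eq1[of A x g] by (simp add: mult.commute)

lemma sum_delta2: "finite A \<Longrightarrow> (\<Sum>x\<in>A. \<Sum>y\<in>A. f x y * (if x = y then 1 else 0)) = (\<Sum>x\<in>A. f x x :: 'b::comm_ring_1)"
  by (intro sum.cong refl) (simp add: sum_if_eq2)

lemma idop_join: "idop Y (join Y c y) (join Y e y') = idop Y y y'"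
  by (simp add: idop_def join_def)

lemma ptrace_red_idop: "finite T \<Longrightarrow> ptrace d T X a b = red d T (idop T) X a b"
  unfolding ptrace_def red_def
proof (intro sum.cong refl)
  fix c assume T: "finite T" and c: "c \<in> basis d T"
  have "(\<Sum>e\<in>basis d T. cnj (idop T c e) * X (join T a c) (join T b e))
      = (\<Sum>e\<in>basis d T. (if c = e then 1 else 0) * X (join T a c) (join T b e))"
    using c by (intro sum.cong refl) (simp add: idop_basis)
  also have "\<dots> = X (join T a c) (join T b c)" using T c by (simp add: finite_basis sum_if_eq1)
  finally show "X (join T a c) (join T b c) = (\<Sum>e\<in>basis d T. cnj (idop T c e) * X (join T a c) (join T b e))" by simp
qed

lemma psd_idop: "finite T \<Longrightarrow> psd d T (idop T)"
  unfolding psd_psdI psdI_def qf_def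
proof
  fix v assume T: "finite T"
  have "(\<Sum>a\<in>basis d T. \<Sum>b\<in>basis d T. cnj (v a) * idop T a b * v b) = (\<Sum>a\<in>basis d T. cnj (v a) * v a)"
    using T by (intro sum.cong refl) (simp add: idop_basis finite_basis mult.assoc sum_distrib_left[symmetric] sum_if_eq1)
  then show "nonneg (\<Sum>a\<in>basis d T. \<Sum>b\<in>basis d T. cnj (v a) * idop T a b * v b)"
    by (simp add: nonneg_sum nonneg_cnj_mult)
qed

lemma psd_cong: "op_eq d S M M' \<Longrightarrow> psd d S M \<longleftrightarrow> psd d S M'"
  unfolding psd_psdI op_eq_def by (rule psdI_cong) auto

lemma psd_ptrace:
  assumes "finite S" "finite T" "S \<inter> T = {}" "psd d (S \<union> T) X"
  shows "psd d S (ptrace d T X)"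
proof -
  have "psd d S (red d T (idop T) X)" using assms by (intro psd_red psd_idop) auto
  moreover have "ptrace d T X = red d T (idop T) X" using assms(2) by (auto simp: fun_eq_iff ptrace_red_idop)
  ultimately show ?thesis by simp
qed

lemma join_join_ptr: "join (T1 \<union> T2) a (join T2 c1 c2) = join T2 (join T1 a c1) c2"
  by (auto simp: join_def fun_eq_iff)

lemma ptrace_ptrace:
  assumes "finite T1" "finite T2" "T1 \<inter> T2 = {}"
  shows "ptrace d T1 (ptrace d T2 X) = ptrace d (T1 \<union> T2) X"
  unfolding ptrace_def fun_eq_iff sum_split[OF assms] join_join_ptr by simp

lemma join_comm: "T \<inter> M = {} \<Longrightarrow> join M (join T a y) c = join T (join M a c) y"
  by (auto simp: join_def fun_eq_iff)

lemma ptrace_red: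
  assumes "T \<inter> M = {}"
  shows "ptrace d T (red d M R X) = red d M R (ptrace d T X)"
proof (intro ext)
  fix a b
  have "ptrace d T (red d M R X) a b = (\<Sum>y\<in>basis d T. \<Sum>c\<in>basis d M. \<Sum>e\<in>basis d M.
      cnj (R c e) * X (join T (join M a c) y) (join T (join M b e) y))"
    unfolding ptrace_def red_def join_comm[OF assms] ..
  also have "\<dots> = (\<Sum>c\<in>basis d M. \<Sum>e\<in>basis d M. \<Sum>y\<in>basis d T.
      cnj (R c e) * X (join T (join M a c) y) (join T (join M b e) y))"
    by (rule sum_swap3[symmetric])
  also have "\<dots> = red d M R (ptrace d T X) a b"
    unfolding red_def ptrace_def by (simp add: sum_distrib_left)
  finally show "ptrace d T (red d M R X) a b = red d M R (ptrace d T X) a b" .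
qed

lemma restr_join_tr1: "T1 \<subseteq> U \<Longrightarrow> T2 \<inter> U = {} \<Longrightarrow>
   restr U (join (T1 \<union> T2) a (join T2 c1 c2)) = join T1 (restr U a) c1"
  by (auto simp: join_def restr_def fun_eq_iff)

lemma restr_join_tr2: "T1 \<subseteq> U \<Longrightarrow> T2 \<inter> U = {} \<Longrightarrow>
   restr (-U) (join (T1 \<union> T2) a (join T2 c1 c2)) = join T2 (restr (-U) a) c2"
  by (auto simp: join_def restr_def fun_eq_iff)

lemma ptrace_tens:
  assumes "finite T1" "finite T2" "T1 \<inter> T2 = {}" "T1 \<subseteq> U" "T2 \<inter> U = {}"
  shows "ptrace d (T1 \<union> T2) (tens U A B) = tens U (ptrace d T1 A) (ptrace d T2 B)"
  unfolding ptrace_def tens_def fun_eq_iff sum_split[OF assms(1-3)]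
    restr_join_tr1[OF assms(4,5)] restr_join_tr2[OF assms(4,5)]
  by (simp add: sum_product)

lemma tens_ident_tensor: "T1 \<subseteq> U \<Longrightarrow> T2 \<inter> U = {} \<Longrightarrow>
  tens U (ident_tensor T1 A) (ident_tensor T2 B) = ident_tensor (T1 \<union> T2) (tens U A B)"
proof -
  assume a: "T1 \<subseteq> U" "T2 \<inter> U = {}"
  have 1: "zero_on T1 (restr U x) = restr U (zero_on (T1 \<union> T2) x)" for x
    using a by (auto simp: zero_on_def restr_def fun_eq_iff)
  have 2: "zero_on T2 (restr (-U) x) = restr (-U) (zero_on (T1 \<union> T2) x)" for x
    using a by (auto simp: zero_on_def restr_def fun_eq_iff)
  have 3: "idop T1 (restr U x) (restr U y) * idop T2 (restr (-U) x) (restr (-U) y) = idop (T1 \<union> T2) x y" for x y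
    using a by (auto simp: idop_def restr_def)
  show ?thesis unfolding tens_def ident_tensor_def fun_eq_iff 1 2 3[symmetric] by simp
qed

lemma tens_idop: "T1 \<subseteq> U \<Longrightarrow> T2 \<inter> U = {} \<Longrightarrow> tens U (idop T1) (idop T2) = idop (T1 \<union> T2)"
  by (auto simp: tens_def idop_def restr_def fun_eq_iff)

lemma op_eq_tens:
  assumes "S1 \<subseteq> U" "S2 \<inter> U = {}" "op_eq d S1 A A'" "op_eq d S2 B B'"
  shows "op_eq d (S1 \<union> S2) (tens U A B) (tens U A' B')"
  using assms unfolding op_eq_def tens_def by (simp add: restr_in_U1 restr_in_U2)

lemma red_ident_tensor:
  assumes "finite S" "finite Y" "S \<inter> Y = {}"
  shows "red d (S \<union> Y) (ident_tensor Y Q) X a b = red d S Q (ptrace d Y X) a b"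
proof -
  have z: "zero_on Y (join Y c y) = c" if "c \<in> basis d S" for c y
    using that assms(3) by (auto simp: zero_on_def join_def basis_def fun_eq_iff)
  have j: "join (S \<union> Y) a (join Y c y) = join Y (join S a c) y" for a c y
    by (auto simp: join_def fun_eq_iff)
  have "red d (S \<union> Y) (ident_tensor Y Q) X a b = (\<Sum>c\<in>basis d S. \<Sum>y\<in>basis d Y. \<Sum>e\<in>basis d S. \<Sum>y'\<in>basis d Y.
     cnj (Q c e) * X (join Y (join S a c) y) (join Y (join S b e) y') * (if y = y' then 1 else 0))"
    unfolding red_def sum_split[OF assms] ident_tensor_def j
    by (intro sum.cong refl) (auto simp: z idop_basis idop_join)
  also have "\<dots> = (\<Sum>c\<in>basis d S. \<Sum>e\<in>basis d S. \<Sum>y\<in>basis d Y. \<Sum>y'\<in>basis d Y.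
     cnj (Q c e) * X (join Y (join S a c) y) (join Y (join S b e) y') * (if y = y' then 1 else 0))"
    by (rule sum_swap_mid)
  also have "\<dots> = red d S Q (ptrace d Y X) a b"
    unfolding red_def ptrace_def using assms(2)
    by (simp add: sum_delta2 finite_basis sum_distrib_left)
  finally show ?thesis .
qed


definition LL :: "(nat \<Rightarrow> 'l set) \<Rightarrow> (nat \<Rightarrow> 'l set) \<Rightarrow> nat \<Rightarrow> 'l set" where
  "LL Y X j = (\<Union>j'\<in>{1..j}. Y j' \<union> X j')"

definition wf_fam :: "nat \<Rightarrow> (nat \<Rightarrow> 'l set) \<Rightarrow> (nat \<Rightarrow> 'l set) \<Rightarrow> bool" where
  "wf_fam r Y X \<longleftrightarrow> (\<forall>j\<in>{1..r}. finite (Y j) \<and> finite (X j)) \<and>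
     (\<forall>i\<in>{1..r}. \<forall>j\<in>{1..r}. Y i \<inter> X j = {} \<and> (i \<noteq> j \<longrightarrow> Y i \<inter> Y j = {} \<and> X i \<inter> X j = {}))"

definition gstrat :: "('l \<Rightarrow> nat) \<Rightarrow> nat \<Rightarrow> (nat \<Rightarrow> 'l set) \<Rightarrow> (nat \<Rightarrow> 'l set) \<Rightarrow> (nat \<Rightarrow> 'l op) \<Rightarrow> bool" where
  "gstrat d r Y X Xs \<longleftrightarrow> (\<forall>j\<in>{1..r}. psd d (LL Y X j) (Xs j)) \<and>
     op_eq d (X 1) (ptrace d (Y 1) (Xs 1)) (idop (X 1)) \<and>
     (\<forall>j\<in>{2..r}. op_eq d (LL Y X j - Y j) (ptrace d (Y j) (Xs j)) (ident_tensor (X j) (Xs (j-1))))"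

definition shiftY :: "(nat \<Rightarrow> 'l set) \<Rightarrow> nat \<Rightarrow> 'l set" where
  "shiftY Y j = (if j = 1 then {} else Y (j - 1))"

lemma LL_0[simp]: "LL Y X 0 = {}" by (simp add: LL_def)

lemma LL_Suc: "LL Y X (Suc j) = LL Y X j \<union> Y (Suc j) \<union> X (Suc j)"
  unfolding LL_def by (subst atLeastAtMostSuc_conv) auto

lemma LL_un: "LL (\<lambda>j. Y1 j \<union> Y2 j) (\<lambda>j. X1 j \<union> X2 j) j = LL Y1 X1 j \<union> LL Y2 X2 j"
  by (auto simp: LL_def)

lemma LL_sub: "j' \<in> {1..j} \<Longrightarrow> Y j' \<union> X j' \<subseteq> LL Y X j"
  by (auto simp: LL_def)

lemma LL_mem: "l \<in> LL Y X j \<longleftrightarrow> (\<exists>j'\<in>{1..j}. l \<in> Y j' \<or> l \<in> X j')"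
  by (auto simp: LL_def)

lemma wf_D1: "wf_fam r Y X \<Longrightarrow> i \<in> {1..r} \<Longrightarrow> j \<in> {1..r} \<Longrightarrow> Y i \<inter> X j = {}"
  unfolding wf_fam_def by blast
lemma wf_D2: "wf_fam r Y X \<Longrightarrow> i \<in> {1..r} \<Longrightarrow> j \<in> {1..r} \<Longrightarrow> i \<noteq> j \<Longrightarrow> Y i \<inter> Y j = {}"
  unfolding wf_fam_def by blast
lemma wf_D3: "wf_fam r Y X \<Longrightarrow> i \<in> {1..r} \<Longrightarrow> j \<in> {1..r} \<Longrightarrow> i \<noteq> j \<Longrightarrow> X i \<inter> X j = {}"
  unfolding wf_fam_def by blast

lemma wf_finite_LL: "wf_fam r Y X \<Longrightarrow> j \<le> r \<Longrightarrow> finite (LL Y X j)"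
  by (auto simp: LL_def wf_fam_def)

lemma wf_finite: "wf_fam r Y X \<Longrightarrow> j \<in> {1..r} \<Longrightarrow> finite (Y j) \<and> finite (X j)"
  by (auto simp: wf_fam_def)

lemma wf_disj:
  assumes "wf_fam r Y X" "j \<in> {1..r}"
  shows "LL Y X (j - 1) \<inter> Y j = {}" "LL Y X (j - 1) \<inter> X j = {}" "Y j \<inter> X j = {}"
proof -
  have h: "\<forall>j'\<in>{1..j-1}. (Y j' \<union> X j') \<inter> Y j = {} \<and> (Y j' \<union> X j') \<inter> X j = {}"
  proof
    fix j' assume j': "j' \<in> {1..j-1}"
    then have "j' \<in> {1..r}" "j' \<noteq> j" using assms(2) by auto
    then show "(Y j' \<union> X j') \<inter> Y j = {} \<and> (Y j' \<union> X j') \<inter> X j = {}"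
      using wf_D1[OF assms(1), of j' j] wf_D1[OF assms(1), of j j'] wf_D2[OF assms(1), of j' j] wf_D3[OF assms(1), of j' j] assms(2)
      by blast
  qed
  then show "LL Y X (j - 1) \<inter> Y j = {}" "LL Y X (j - 1) \<inter> X j = {}" unfolding LL_def by blast+
  show "Y j \<inter> X j = {}" using wf_D1[OF assms(1) assms(2) assms(2)] .
qed

lemma LL_prev: "j \<ge> 1 \<Longrightarrow> LL Y X j = LL Y X (j - 1) \<union> Y j \<union> X j"
  using LL_Suc[of Y X "j - 1"] by simp

lemma LL_minus_Y: "wf_fam r Y X \<Longrightarrow> j \<in> {1..r} \<Longrightarrow> LL Y X j - Y j = LL Y X (j - 1) \<union> X j"
  using LL_prev[of j Y X] wf_disj[of r Y X j] by auto

lemma LL_shift: "j \<ge> 1 \<Longrightarrow> LL X (shiftY Y) j = LL Y X (j - 1) \<union> X j"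
proof (induction j)
  case 0 then show ?case by simp
next
  case (Suc j)
  show ?case
  proof (cases "j = 0")
    case True then show ?thesis by (simp add: LL_Suc shiftY_def)
  next
    case False
    then have "LL X (shiftY Y) j = LL Y X (j - 1) \<union> X j" using Suc by simp
    moreover have "LL Y X j = LL Y X (j - 1) \<union> Y j \<union> X j" using False by (simp add: LL_prev)
    moreover have "shiftY Y (Suc j) = Y j" using False by (simp add: shiftY_def)
    ultimately show ?thesis using False by (simp add: LL_Suc) blast
  qed
qed

lemma wf_shift: "wf_fam r Y X \<Longrightarrow> wf_fam r X (shiftY Y)"
proof -
  assume w: "wf_fam r Y X"
  have A: "\<forall>j\<in>{1..r}. finite (X j) \<and> finite (shiftY Y j)"
  proof
    fix j assume j: "j \<in> {1..r}"
    show "finite (X j) \<and> finite (shiftY Y j)"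
    proof (cases "j = 1")
      case True then show ?thesis using wf_finite[OF w j] by (simp add: shiftY_def)
    next
      case False then have "j - 1 \<in> {1..r}" using j by auto
      then show ?thesis using wf_finite[OF w j] wf_finite[OF w \<open>j - 1 \<in> {1..r}\<close>] False by (simp add: shiftY_def)
    qed
  qed
  have B: "X i \<inter> shiftY Y j = {} \<and> (i \<noteq> j \<longrightarrow> X i \<inter> X j = {} \<and> shiftY Y i \<inter> shiftY Y j = {})"
    if i: "i \<in> {1..r}" and j: "j \<in> {1..r}" for i j
  proof -
    have 1: "X i \<inter> shiftY Y j = {}"
    proof (cases "j = 1")
      case True then show ?thesis by (simp add: shiftY_def)
    next
      case False then have "j - 1 \<in> {1..r}" using j by auto
      then show ?thesis using w i False wf_D1[OF w, of "j - 1" i] by (simp add: shiftY_def Int_commute)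
    qed
    have 2: "X i \<inter> X j = {} \<and> shiftY Y i \<inter> shiftY Y j = {}" if ne: "i \<noteq> j"
    proof -
      have "X i \<inter> X j = {}" using wf_D3[OF w i j ne] .
      moreover have "shiftY Y i \<inter> shiftY Y j = {}"
      proof (cases "i = 1 \<or> j = 1")
        case True then show ?thesis by (auto simp: shiftY_def)
      next
        case False then have "i - 1 \<in> {1..r}" "j - 1 \<in> {1..r}" "i - 1 \<noteq> j - 1" using i j ne by auto
        then show ?thesis using False wf_D2[OF w, of "i - 1" "j - 1"] by (simp add: shiftY_def)
      qed
      ultimately show ?thesis by simp
    qed
    show ?thesis using 1 2 by blast
  qed
  show ?thesis unfolding wf_fam_def using A B by (simp add: Ball_def)
qed


definition sep :: "nat \<Rightarrow> (nat \<Rightarrow> 'l set) \<Rightarrow> (nat \<Rightarrow> 'l set) \<Rightarrow> (nat \<Rightarrow> 'l set) \<Rightarrow> (nat \<Rightarrow> 'l set) \<Rightarrow> 'l set \<Rightarrow> bool" where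
  "sep r Y1 X1 Y2 X2 U \<longleftrightarrow> (\<forall>j\<in>{1..r}. Y1 j \<union> X1 j \<subseteq> U \<and> (Y2 j \<union> X2 j) \<inter> U = {})"

lemma sep_LL1: "sep r Y1 X1 Y2 X2 U \<Longrightarrow> j \<le> r \<Longrightarrow> LL Y1 X1 j \<subseteq> U"
  unfolding sep_def LL_def by force

lemma sep_LL2: "sep r Y1 X1 Y2 X2 U \<Longrightarrow> j \<le> r \<Longrightarrow> LL Y2 X2 j \<inter> U = {}"
  unfolding sep_def LL_def by force

lemma sepD: "sep r Y1 X1 Y2 X2 U \<Longrightarrow> j \<in> {1..r} \<Longrightarrow> Y1 j \<subseteq> U \<and> X1 j \<subseteq> U \<and> Y2 j \<inter> U = {} \<and> X2 j \<inter> U = {}"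
  unfolding sep_def by blast

lemma wf_union:
  assumes w1: "wf_fam r Y1 X1" and w2: "wf_fam r Y2 X2" and s: "sep r Y1 X1 Y2 X2 U"
  shows "wf_fam r (\<lambda>j. Y1 j \<union> Y2 j) (\<lambda>j. X1 j \<union> X2 j)"
proof -
  have A: "finite (Y1 j \<union> Y2 j) \<and> finite (X1 j \<union> X2 j)" if "j \<in> {1..r}" for j
    using wf_finite[OF w1 that] wf_finite[OF w2 that] by simp
  have B: "(Y1 i \<union> Y2 i) \<inter> (X1 j \<union> X2 j) = {} \<and> (i \<noteq> j \<longrightarrow> (Y1 i \<union> Y2 i) \<inter> (Y1 j \<union> Y2 j) = {} \<and> (X1 i \<union> X2 i) \<inter> (X1 j \<union> X2 j) = {})"
    if i: "i \<in> {1..r}" and j: "j \<in> {1..r}" for i j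
  proof -
    have c: "Y1 i \<inter> X2 j = {}" "Y2 i \<inter> X1 j = {}" "Y1 i \<inter> Y2 j = {}" "Y2 i \<inter> Y1 j = {}"
      "X1 i \<inter> X2 j = {}" "X2 i \<inter> X1 j = {}"
      using sepD[OF s i] sepD[OF s j] by blast+
    show ?thesis using wf_D1[OF w1 i j] wf_D1[OF w2 i j] wf_D2[OF w1 i j] wf_D2[OF w2 i j] wf_D3[OF w1 i j] wf_D3[OF w2 i j] c
      by (simp add: Int_Un_distrib Int_Un_distrib2)
  qed
  show ?thesis unfolding wf_fam_def using A B by (simp add: Ball_def)
qed

lemma gstrat_tens:
  assumes r: "1 \<le> r" and w1: "wf_fam r Y1 X1" and w2: "wf_fam r Y2 X2" and s: "sep r Y1 X1 Y2 X2 U"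
    and A: "gstrat d r Y1 X1 A" and B: "gstrat d r Y2 X2 B"
  shows "gstrat d r (\<lambda>j. Y1 j \<union> Y2 j) (\<lambda>j. X1 j \<union> X2 j) (\<lambda>j. tens U (A j) (B j))"
  unfolding gstrat_def LL_un
proof (intro conjI ballI)
  fix j assume j: "j \<in> {1..r}"
  show "psd d (LL Y1 X1 j \<union> LL Y2 X2 j) (tens U (A j) (B j))"
  proof (rule psd_tens)
    show "finite (LL Y1 X1 j)" "finite (LL Y2 X2 j)" using wf_finite_LL[OF w1] wf_finite_LL[OF w2] j by auto
    show L1: "LL Y1 X1 j \<subseteq> U" and L2: "LL Y2 X2 j \<inter> U = {}" using sep_LL1[OF s] sep_LL2[OF s] j by auto
    show "LL Y1 X1 j \<inter> LL Y2 X2 j = {}" using L1 L2 by blast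
    show "psd d (LL Y1 X1 j) (A j)" "psd d (LL Y2 X2 j) (B j)" using A B j by (simp_all add: gstrat_def)
  qed
next
  have j1: "1 \<in> {1..r}" using r by simp
  note sd = sepD[OF s j1]
  have "ptrace d (Y1 1 \<union> Y2 1) (tens U (A 1) (B 1)) = tens U (ptrace d (Y1 1) (A 1)) (ptrace d (Y2 1) (B 1))"
    by (rule ptrace_tens) (use wf_finite[OF w1 j1] wf_finite[OF w2 j1] sd in blast)+
  moreover have "op_eq d (X1 1 \<union> X2 1) (tens U (ptrace d (Y1 1) (A 1)) (ptrace d (Y2 1) (B 1))) (tens U (idop (X1 1)) (idop (X2 1)))"
    by (rule op_eq_tens) (use sd A B in \<open>simp_all add: gstrat_def\<close>)
  moreover have "tens U (idop (X1 1)) (idop (X2 1)) = idop (X1 1 \<union> X2 1)" using sd by (simp add: tens_idop)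
  ultimately show "op_eq d (X1 1 \<union> X2 1) (ptrace d (Y1 1 \<union> Y2 1) (tens U (A 1) (B 1))) (idop (X1 1 \<union> X2 1))" by simp
next
  fix j assume j2: "j \<in> {2..r}"
  then have j: "j \<in> {1..r}" by auto
  note sd = sepD[OF s j]
  have L1: "LL Y1 X1 j \<subseteq> U" and L2: "LL Y2 X2 j \<inter> U = {}" using sep_LL1[OF s] sep_LL2[OF s] j by auto
  have eqS: "LL Y1 X1 j \<union> LL Y2 X2 j - (Y1 j \<union> Y2 j) = (LL Y1 X1 j - Y1 j) \<union> (LL Y2 X2 j - Y2 j)"
    using L1 L2 sd by blast
  have "ptrace d (Y1 j \<union> Y2 j) (tens U (A j) (B j)) = tens U (ptrace d (Y1 j) (A j)) (ptrace d (Y2 j) (B j))"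
    by (rule ptrace_tens) (use wf_finite[OF w1 j] wf_finite[OF w2 j] sd in blast)+
  moreover have "op_eq d ((LL Y1 X1 j - Y1 j) \<union> (LL Y2 X2 j - Y2 j)) (tens U (ptrace d (Y1 j) (A j)) (ptrace d (Y2 j) (B j)))
     (tens U (ident_tensor (X1 j) (A (j-1))) (ident_tensor (X2 j) (B (j-1))))"
  proof (rule op_eq_tens)
    show "LL Y1 X1 j - Y1 j \<subseteq> U" "(LL Y2 X2 j - Y2 j) \<inter> U = {}" using L1 L2 by auto
    show "op_eq d (LL Y1 X1 j - Y1 j) (ptrace d (Y1 j) (A j)) (ident_tensor (X1 j) (A (j - 1)))"
      using A j2 by (simp add: gstrat_def)
    show "op_eq d (LL Y2 X2 j - Y2 j) (ptrace d (Y2 j) (B j)) (ident_tensor (X2 j) (B (j - 1)))"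
      using B j2 by (simp add: gstrat_def)
  qed
  moreover have "tens U (ident_tensor (X1 j) (A (j-1))) (ident_tensor (X2 j) (B (j-1)))
      = ident_tensor (X1 j \<union> X2 j) (tens U (A (j-1)) (B (j-1)))"
    using sd by (simp add: tens_ident_tensor)
  ultimately show "op_eq d (LL Y1 X1 j \<union> LL Y2 X2 j - (Y1 j \<union> Y2 j)) (ptrace d (Y1 j \<union> Y2 j) (tens U (A j) (B j)))
          (ident_tensor (X1 j \<union> X2 j) (tens U (A (j - 1)) (B (j - 1))))" unfolding eqS by simp
qed


lemma red_cong: "(\<And>c e. c \<in> basis d S \<Longrightarrow> e \<in> basis d S \<Longrightarrow> Q c e = Q' c e) \<Longrightarrow> red d S Q X a b = red d S Q' X a b"
  unfolding red_def by (intro sum.cong refl) auto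

lemma red_step:
  assumes fL: "finite L" and fX: "finite X2" and d1: "L \<inter> X2 = {}" and d2: "S \<inter> (L \<union> X2) = {}" and sub: "X1 \<subseteq> S"
    and a: "a \<in> basis d S" and b: "b \<in> basis d S"
  shows "(\<Sum>c\<in>basis d (L \<union> X2). \<Sum>e\<in>basis d (L \<union> X2). cnj (R c e) * ident_tensor (X1 \<union> X2) W (join (L \<union> X2) a c) (join (L \<union> X2) b e))
   = idop X1 a b * red d L (ptrace d X2 R) W (zero_on X1 a) (zero_on X1 b)"
proof -
  define a' where "a' = zero_on X1 a"
  define b' where "b' = zero_on X1 b"
  have z: "zero_on (X1 \<union> X2) (join (L \<union> X2) p (join X2 c0 x)) = join L (zero_on X1 p) c0" if "p \<in> basis d S" for p c0 x
    using that d1 d2 sub by (auto simp: zero_on_def join_def basis_def fun_eq_iff)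
  have i: "idop (X1 \<union> X2) (join (L \<union> X2) a (join X2 c0 x)) (join (L \<union> X2) b (join X2 e0 x')) = idop X1 a b * idop X2 x x'" for c0 x e0 x'
    using d1 d2 sub by (auto simp: idop_def join_def)
  have "(\<Sum>c\<in>basis d (L \<union> X2). \<Sum>e\<in>basis d (L \<union> X2). cnj (R c e) * ident_tensor (X1 \<union> X2) W (join (L \<union> X2) a c) (join (L \<union> X2) b e))
     = (\<Sum>c0\<in>basis d L. \<Sum>x\<in>basis d X2. \<Sum>e0\<in>basis d L. \<Sum>x'\<in>basis d X2.
          idop X1 a b * (cnj (R (join X2 c0 x) (join X2 e0 x')) * W (join L a' c0) (join L b' e0)) * (if x = x' then 1 else 0))"
    unfolding sum_split[OF fL fX d1] ident_tensor_def a'_def b'_def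
    by (intro sum.cong refl) (simp add: z[OF a] z[OF b] i idop_basis)
  also have "\<dots> = (\<Sum>c0\<in>basis d L. \<Sum>e0\<in>basis d L. \<Sum>x\<in>basis d X2. \<Sum>x'\<in>basis d X2.
          idop X1 a b * (cnj (R (join X2 c0 x) (join X2 e0 x')) * W (join L a' c0) (join L b' e0)) * (if x = x' then 1 else 0))"
    by (rule sum_swap_mid)
  also have "\<dots> = (\<Sum>c0\<in>basis d L. \<Sum>e0\<in>basis d L. \<Sum>x\<in>basis d X2.
          idop X1 a b * (cnj (R (join X2 c0 x) (join X2 e0 x)) * W (join L a' c0) (join L b' e0)))"
    using fX by (intro sum.cong refl) (simp add: sum_if_eq2 finite_basis)
  also have "\<dots> = idop X1 a b * red d L (ptrace d X2 R) W a' b'"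
    unfolding red_def ptrace_def by (simp add: sum_distrib_left sum_distrib_right)
  finally show ?thesis unfolding a'_def b'_def .
qed


lemma basis_empty: "basis d {} = {\<lambda>_. 0}"
  by (auto simp: basis_def)

lemma red_empty: "red d {} Q W a b = cnj (Q (\<lambda>_. 0) (\<lambda>_. 0)) * W a b"
  by (simp add: red_def basis_empty join_def)

lemma ident_tensor_one: "ident_tensor T (\<lambda>_ _. 1) = idop T"
  by (simp add: ident_tensor_def fun_eq_iff)

lemma gstrat_red:
  assumes r: "1 \<le> r" and w1: "wf_fam r Y1 X1" and w2: "wf_fam r Y2 X2" and s: "sep r Y1 X1 Y2 X2 U"
    and Xs: "gstrat d r (\<lambda>j. Y1 j \<union> Y2 j) (\<lambda>j. X1 j \<union> X2 j) Xs"
    and R: "gstrat d r X2 (shiftY Y2) R"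
  shows "gstrat d r Y1 X1 (\<lambda>j. red d (LL Y2 X2 j - Y2 j) (R j) (ptrace d (Y2 j) (Xs j)))"
proof -
  define M where "M j = LL Y2 X2 j - Y2 j" for j
  define Z where "Z j = red d (M j) (R j) (ptrace d (Y2 j) (Xs j))" for j
  have M_eq: "M j = LL Y2 X2 (j - 1) \<union> X2 j" if "j \<in> {1..r}" for j
    unfolding M_def using LL_minus_Y[OF w2 that] .
  have LLsh: "LL X2 (shiftY Y2) j = M j" if "j \<in> {1..r}" for j
    using LL_shift[of j X2 Y2] M_eq[OF that] that by simp
  have L1U: "LL Y1 X1 j \<subseteq> U" if "j \<le> r" for j using sep_LL1[OF s that] .
  have L2U: "LL Y2 X2 j \<inter> U = {}" if "j \<le> r" for j using sep_LL2[OF s that] .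
  have fin1: "finite (LL Y1 X1 j)" "finite (LL Y2 X2 j)" if "j \<le> r" for j
    using wf_finite_LL[OF w1 that] wf_finite_LL[OF w2 that] by auto
  have MU: "M j \<inter> U = {}" if "j \<le> r" for j using L2U[OF that] unfolding M_def by blast
  have finM: "finite (M j)" if "j \<le> r" for j using fin1(2)[OF that] unfolding M_def by simp
  have Y2M: "M j \<inter> Y2 j = {}" for j unfolding M_def by blast
  have trick: "ptrace d (Y1 j) (Z j) = red d (M j) (R j) (ptrace d (Y1 j \<union> Y2 j) (Xs j))" if j: "j \<in> {1..r}" for j
  proof -
    have "Y1 j \<inter> M j = {}" using sepD[OF s j] MU[of j] j by auto
    then have "ptrace d (Y1 j) (Z j) = red d (M j) (R j) (ptrace d (Y1 j) (ptrace d (Y2 j) (Xs j)))"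
      unfolding Z_def by (rule ptrace_red)
    also have "ptrace d (Y1 j) (ptrace d (Y2 j) (Xs j)) = ptrace d (Y1 j \<union> Y2 j) (Xs j)"
      by (rule ptrace_ptrace) (use wf_finite[OF w1 j] wf_finite[OF w2 j] sepD[OF s j] in blast)+
    finally show ?thesis .
  qed
  show ?thesis
    unfolding gstrat_def M_def[symmetric] Z_def[symmetric]
  proof (intro conjI ballI)
    fix j assume j: "j \<in> {1..r}"
    have jr: "j \<le> r" using j by simp
    have P: "psd d ((LL Y1 X1 j \<union> M j) \<union> Y2 j) (Xs j)"
    proof -
      have "(LL Y1 X1 j \<union> M j) \<union> Y2 j = LL (\<lambda>j. Y1 j \<union> Y2 j) (\<lambda>j. X1 j \<union> X2 j) j"
        unfolding LL_un M_def using LL_sub[of j j Y2 X2] j by auto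
      then show ?thesis using Xs j by (simp add: gstrat_def)
    qed
    have P2: "psd d (LL Y1 X1 j \<union> M j) (ptrace d (Y2 j) (Xs j))"
    proof (rule psd_ptrace[OF _ _ _ P])
      show "finite (LL Y1 X1 j \<union> M j)" using fin1[OF jr] finM[OF jr] by simp
      show "finite (Y2 j)" using wf_finite[OF w2 j] by simp
      show "(LL Y1 X1 j \<union> M j) \<inter> Y2 j = {}" using L1U[OF jr] sepD[OF s j] Y2M[of j] by blast
    qed
    have "psd d (LL X2 (shiftY Y2) j) (R j)" using R j unfolding gstrat_def by blast
    then have PR: "psd d (M j) (R j)" using LLsh[OF j] by simp
    show "psd d (LL Y1 X1 j) (Z j)" unfolding Z_def
      by (rule psd_red[OF _ _ _ P2 PR]) (use fin1[OF jr] finM[OF jr] L1U[OF jr] MU[OF jr] in blast)+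
  next
    have j1: "1 \<in> {1..r}" using r by simp
    have M1: "M 1 = {} \<union> X2 1" using M_eq[OF j1] by simp
    show "op_eq d (X1 1) (ptrace d (Y1 1) (Z 1)) (idop (X1 1))"
      unfolding op_eq_def
    proof (intro ballI)
      fix a b assume a: "a \<in> basis d (X1 1)" and b: "b \<in> basis d (X1 1)"
      note sd = sepD[OF s j1]
      have dXM: "X1 1 \<inter> M 1 = {}" using sd MU[of 1] r by auto
      have XsC: "ptrace d (Y1 1 \<union> Y2 1) (Xs 1) p q = ident_tensor (X1 1 \<union> X2 1) (\<lambda>_ _. 1) p q"
        if "p \<in> basis d (X1 1 \<union> X2 1)" "q \<in> basis d (X1 1 \<union> X2 1)" for p q
        using Xs that unfolding gstrat_def op_eq_def ident_tensor_one by blast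
      have "ptrace d (Y1 1) (Z 1) a b = (\<Sum>c\<in>basis d ({} \<union> X2 1). \<Sum>e\<in>basis d ({} \<union> X2 1).
           cnj (R 1 c e) * ident_tensor (X1 1 \<union> X2 1) (\<lambda>_ _. 1) (join ({} \<union> X2 1) a c) (join ({} \<union> X2 1) b e))"
        unfolding trick[OF j1] red_def M1[symmetric]
      proof (intro sum.cong refl)
        fix c e assume c: "c \<in> basis d (M 1)" and e: "e \<in> basis d (M 1)"
        have "join (M 1) a c \<in> basis d (X1 1 \<union> X2 1)" "join (M 1) b e \<in> basis d (X1 1 \<union> X2 1)"
          using join_in[OF dXM a c] join_in[OF dXM b e] M1 by auto
        then show "cnj (R 1 c e) * ptrace d (Y1 1 \<union> Y2 1) (Xs 1) (join (M 1) a c) (join (M 1) b e) =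
          cnj (R 1 c e) * ident_tensor (X1 1 \<union> X2 1) (\<lambda>_ _. 1) (join (M 1) a c) (join (M 1) b e)"
          using XsC by simp
      qed
      also have "\<dots> = idop (X1 1) a b * red d {} (ptrace d (X2 1) (R 1)) (\<lambda>_ _. 1) (zero_on (X1 1) a) (zero_on (X1 1) b)"
        by (rule red_step) (use a b dXM M1 wf_finite[OF w2 j1] in auto)
      moreover have "ptrace d (X2 1) (R 1) (\<lambda>_. 0) (\<lambda>_. 0) = 1"
        using R unfolding gstrat_def op_eq_def by (simp add: shiftY_def basis_empty idop_def)
      ultimately show "ptrace d (Y1 1) (Z 1) a b = idop (X1 1) a b" by (simp add: red_empty)
    qed
  next
    fix j assume j2: "j \<in> {2..r}"
    then have j: "j \<in> {1..r}" and jp: "j - 1 \<in> {1..r}" and jr: "j \<le> r" by auto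
    note sd = sepD[OF s j]
    define S where "S = LL Y1 X1 j - Y1 j"
    have S_eq: "S = LL Y1 X1 (j - 1) \<union> X1 j" unfolding S_def using LL_minus_Y[OF w1 j] .
    have dSM: "S \<inter> M j = {}" using L1U[OF jr] MU[OF jr] unfolding S_def by blast
    have SMU: "LL (\<lambda>j. Y1 j \<union> Y2 j) (\<lambda>j. X1 j \<union> X2 j) j - (Y1 j \<union> Y2 j) = S \<union> M j"
      unfolding LL_un S_def M_def using L1U[OF jr] L2U[OF jr] sd by blast
    have dL: "LL Y2 X2 (j - 1) \<inter> X2 j = {}" using wf_disj[OF w2 j] by simp
    have Mj: "M j = LL Y2 X2 (j - 1) \<union> X2 j" using M_eq[OF j] .
    show "op_eq d (LL Y1 X1 j - Y1 j) (ptrace d (Y1 j) (Z j)) (ident_tensor (X1 j) (Z (j - 1)))"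
      unfolding op_eq_def S_def[symmetric]
    proof (intro ballI)
      fix a b assume a: "a \<in> basis d S" and b: "b \<in> basis d S"
      have XsC: "ptrace d (Y1 j \<union> Y2 j) (Xs j) p q = ident_tensor (X1 j \<union> X2 j) (Xs (j - 1)) p q"
        if "p \<in> basis d (S \<union> M j)" "q \<in> basis d (S \<union> M j)" for p q
      proof -
        have "op_eq d (LL (\<lambda>j. Y1 j \<union> Y2 j) (\<lambda>j. X1 j \<union> X2 j) j - (Y1 j \<union> Y2 j)) (ptrace d (Y1 j \<union> Y2 j) (Xs j))
           (ident_tensor (X1 j \<union> X2 j) (Xs (j - 1)))" using Xs j2 unfolding gstrat_def by blast
        then show ?thesis unfolding SMU op_eq_def using that by blast
      qed
      have "ptrace d (Y1 j) (Z j) a b = (\<Sum>c\<in>basis d (LL Y2 X2 (j - 1) \<union> X2 j). \<Sum>e\<in>basis d (LL Y2 X2 (j - 1) \<union> X2 j).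
           cnj (R j c e) * ident_tensor (X1 j \<union> X2 j) (Xs (j - 1)) (join (LL Y2 X2 (j - 1) \<union> X2 j) a c) (join (LL Y2 X2 (j - 1) \<union> X2 j) b e))"
        unfolding trick[OF j] red_def Mj[symmetric]
      proof (intro sum.cong refl)
        fix c e assume c: "c \<in> basis d (M j)" and e: "e \<in> basis d (M j)"
        have "join (M j) a c \<in> basis d (S \<union> M j)" "join (M j) b e \<in> basis d (S \<union> M j)"
          using join_in[OF dSM a c] join_in[OF dSM b e] by auto
        then show "cnj (R j c e) * ptrace d (Y1 j \<union> Y2 j) (Xs j) (join (M j) a c) (join (M j) b e) =
          cnj (R j c e) * ident_tensor (X1 j \<union> X2 j) (Xs (j - 1)) (join (M j) a c) (join (M j) b e)"
          using XsC by simp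
      qed
      also have "\<dots> = idop (X1 j) a b * red d (LL Y2 X2 (j - 1)) (ptrace d (X2 j) (R j)) (Xs (j - 1)) (zero_on (X1 j) a) (zero_on (X1 j) b)"
      proof (rule red_step)
        show "finite (LL Y2 X2 (j - 1))" using fin1 jr by simp
        show "finite (X2 j)" using wf_finite[OF w2 j] by simp
        show "LL Y2 X2 (j - 1) \<inter> X2 j = {}" using dL .
        show "S \<inter> (LL Y2 X2 (j - 1) \<union> X2 j) = {}" using dSM Mj by simp
        show "X1 j \<subseteq> S" using S_eq by simp
      qed (use a b in auto)
      also have "red d (LL Y2 X2 (j - 1)) (ptrace d (X2 j) (R j)) (Xs (j - 1)) (zero_on (X1 j) a) (zero_on (X1 j) b)
          = red d (LL Y2 X2 (j - 1)) (ident_tensor (Y2 (j - 1)) (R (j - 1))) (Xs (j - 1)) (zero_on (X1 j) a) (zero_on (X1 j) b)"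
      proof (rule red_cong)
        fix c e assume "c \<in> basis d (LL Y2 X2 (j - 1))" "e \<in> basis d (LL Y2 X2 (j - 1))"
        moreover have "LL X2 (shiftY Y2) j - X2 j = LL Y2 X2 (j - 1)" using LLsh[OF j] Mj dL by blast
        moreover have "shiftY Y2 j = Y2 (j - 1)" using j2 by (simp add: shiftY_def)
        ultimately show "ptrace d (X2 j) (R j) c e = ident_tensor (Y2 (j - 1)) (R (j - 1)) c e"
          using R j2 unfolding gstrat_def op_eq_def by auto
      qed
      also have "\<dots> = Z (j - 1) (zero_on (X1 j) a) (zero_on (X1 j) b)"
      proof -
        have e: "LL Y2 X2 (j - 1) = M (j - 1) \<union> Y2 (j - 1)" unfolding M_def using LL_sub[of "j-1" "j-1" Y2 X2] jp by auto
        show ?thesis unfolding Z_def e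
          by (rule red_ident_tensor) (use finM[of "j-1"] jr wf_finite[OF w2 jp] Y2M in auto)
      qed
      finally show "ptrace d (Y1 j) (Z j) a b = ident_tensor (X1 j) (Z (j - 1)) a b"
        by (simp add: ident_tensor_def)
    qed
  qed
qed


definition relab :: "('l \<Rightarrow> 'l) \<Rightarrow> 'l op \<Rightarrow> 'l op" where
  "relab \<phi> M = (\<lambda>a b. M (a \<circ> \<phi>) (b \<circ> \<phi>))"

locale invol =
  fixes \<phi> :: "'l \<Rightarrow> 'l" and d :: "'l \<Rightarrow> nat"
  assumes inv: "\<And>l. \<phi> (\<phi> l) = l" and dphi: "\<And>l. d (\<phi> l) = d l"
begin

declare inv[simp]

lemma inj_phi: "inj \<phi>" by (metis inv injI)

lemma mem_img: "l \<in> \<phi> ` S \<longleftrightarrow> \<phi> l \<in> S"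
  by (metis image_iff inv)

lemma basis_img: "a \<in> basis d (\<phi> ` S) \<longleftrightarrow> a \<circ> \<phi> \<in> basis d S"
  unfolding basis_def using dphi by (auto simp: mem_img)

lemma comp_comp[simp]: "(a \<circ> \<phi>) \<circ> \<phi> = a" by (simp add: fun_eq_iff)

lemma sum_img: "(\<Sum>a\<in>basis d (\<phi> ` S). f a) = (\<Sum>a\<in>basis d S. f (a \<circ> \<phi>))"
proof -
  have "bij_betw (\<lambda>a. a \<circ> \<phi>) (basis d S) (basis d (\<phi> ` S))"
    by (rule bij_betw_byWitness[where f'="\<lambda>a. a \<circ> \<phi>"]) (auto simp: comp_comp basis_img)
  then show ?thesis using sum.reindex_bij_betw[of "\<lambda>a. a \<circ> \<phi>" "basis d S" "basis d (\<phi> ` S)" f] by simp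
qed

lemma psd_relab: "psd d S M \<Longrightarrow> psd d (\<phi> ` S) (relab \<phi> M)"
  unfolding psd_psdI psdI_def qf_def relab_def sum_img
proof (intro allI)
  fix v assume h: "\<forall>v. nonneg (\<Sum>a\<in>basis d S. \<Sum>b\<in>basis d S. cnj (v a) * M a b * v b)"
  show "nonneg (\<Sum>a\<in>basis d S. \<Sum>b\<in>basis d S. cnj (v (a \<circ> \<phi>)) * M (a \<circ> \<phi> \<circ> \<phi>) (b \<circ> \<phi> \<circ> \<phi>) * v (b \<circ> \<phi>))"
    using h[rule_format, of "\<lambda>a. v (a \<circ> \<phi>)"] by simp
qed

lemma join_img: "join (\<phi> ` T) a c \<circ> \<phi> = join T (a \<circ> \<phi>) (c \<circ> \<phi>)"
  by (auto simp: join_def fun_eq_iff mem_img)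

lemma ptrace_relab: "ptrace d (\<phi> ` T) (relab \<phi> M) = relab \<phi> (ptrace d T M)"
  unfolding ptrace_def relab_def sum_img join_img by simp

lemma idop_relab: "relab \<phi> (idop T) = idop (\<phi> ` T)"
  by (auto simp: relab_def idop_def fun_eq_iff mem_img)

lemma zero_on_img: "zero_on (\<phi> ` T) a \<circ> \<phi> = zero_on T (a \<circ> \<phi>)"
  by (auto simp: zero_on_def fun_eq_iff mem_img)

lemma ident_tensor_relab: "relab \<phi> (ident_tensor T M) = ident_tensor (\<phi> ` T) (relab \<phi> M)"
proof (intro ext)
  fix a b
  have "idop (\<phi> ` T) a b = idop T (a \<circ> \<phi>) (b \<circ> \<phi>)" using idop_relab by (metis relab_def)
  then show "relab \<phi> (ident_tensor T M) a b = ident_tensor (\<phi> ` T) (relab \<phi> M) a b"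
    by (simp add: ident_tensor_def relab_def zero_on_img)
qed

lemma op_eq_relab: "op_eq d S A B \<Longrightarrow> op_eq d (\<phi> ` S) (relab \<phi> A) (relab \<phi> B)"
  unfolding op_eq_def relab_def by (simp add: basis_img)

lemma inner_relab: "inner_op d (\<phi> ` S) (relab \<phi> A) (relab \<phi> B) = inner_op d S A B"
  unfolding inner_op_def relab_def sum_img by simp

lemma LL_img: "LL (\<lambda>j. \<phi> ` Y j) (\<lambda>j. \<phi> ` X j) j = \<phi> ` LL Y X j"
  by (auto simp: LL_def)

lemma img_diff: "\<phi> ` (A - B) = \<phi> ` A - \<phi> ` B"
  using inj_phi by (simp add: image_set_diff)

lemma wf_relab: "wf_fam r Y X \<Longrightarrow> wf_fam r (\<lambda>j. \<phi> ` Y j) (\<lambda>j. \<phi> ` X j)"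
  unfolding wf_fam_def using inj_phi by (simp add: image_Int[symmetric])

lemma gstrat_relab:
  assumes "gstrat d r Y X Xs"
  shows "gstrat d r (\<lambda>j. \<phi> ` Y j) (\<lambda>j. \<phi> ` X j) (\<lambda>j. relab \<phi> (Xs j))"
  using assms unfolding gstrat_def LL_img
  by (auto simp: psd_relab ptrace_relab idop_relab[symmetric] ident_tensor_relab[symmetric] img_diff[symmetric]
      intro!: op_eq_relab)

end


definition Yf :: "nat set \<Rightarrow> nat \<Rightarrow> lab set" where
  "Yf K j = {(k, j', b). k \<in> K \<and> j' = j \<and> b}"
definition Xf :: "nat set \<Rightarrow> nat \<Rightarrow> lab set" where
  "Xf K j = {(k, j', b). k \<in> K \<and> j' = j \<and> \<not> b}"
definition SYf :: "nat set \<Rightarrow> nat \<Rightarrow> lab set" where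
  "SYf K = shiftY (Yf K)"
definition swc :: "nat \<Rightarrow> lab \<Rightarrow> lab" where
  "swc n = (\<lambda>(c, j, b). (if c = 0 then n else if c = n then 0 else c, j, b))"
definition Ucp :: "nat set \<Rightarrow> lab set" where
  "Ucp K = {l. fst l \<in> K}"
definition reloc :: "nat \<Rightarrow> lab op \<Rightarrow> lab op" where
  "reloc k M = (\<lambda>a b. M (loc k a) (loc k b))"

lemma invol_swc: "invol (swc n) (dimf dx dy)"
  by unfold_locales (auto simp: swc_def dimf_def split: prod.splits)

lemma Yf_img: "(\<lambda>k. (k, j, True)) ` K = Yf K j"
  by (auto simp: Yf_def)
lemma Xf_img: "(\<lambda>k. (k, j, False)) ` K = Xf K j"
  by (auto simp: Xf_def)

lemma Yf_un: "Yf K1 j \<union> Yf K2 j = Yf (K1 \<union> K2) j" by (auto simp: Yf_def)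
lemma Xf_un: "Xf K1 j \<union> Xf K2 j = Xf (K1 \<union> K2) j" by (auto simp: Xf_def)
lemma SYf_un: "SYf K1 j \<union> SYf K2 j = SYf (K1 \<union> K2) j" by (auto simp: SYf_def shiftY_def Yf_un)

lemma Yf_swc: "swc n ` Yf {0} j = Yf {n} j" by (force simp: Yf_def swc_def)
lemma Xf_swc: "swc n ` Xf {0} j = Xf {n} j" by (force simp: Xf_def swc_def)
lemma SYf_swc: "swc n ` SYf {0} j = SYf {n} j" by (simp add: SYf_def shiftY_def Yf_swc)

lemma Yf_U: "Yf K j \<subseteq> Ucp K" by (auto simp: Yf_def Ucp_def)
lemma Xf_U: "Xf K j \<subseteq> Ucp K" by (auto simp: Xf_def Ucp_def)
lemma SYf_U: "SYf K j \<subseteq> Ucp K" by (auto simp: SYf_def shiftY_def Yf_def Ucp_def)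

lemma wf_YX: "finite K \<Longrightarrow> wf_fam r (Yf K) (Xf K)"
  unfolding wf_fam_def by (auto simp: Yf_img[symmetric] Xf_img[symmetric])

lemma wf_XSY: "finite K \<Longrightarrow> wf_fam r (Xf K) (SYf K)"
  unfolding SYf_def by (rule wf_shift[OF wf_YX])

lemma LL_U: "(\<And>j. FY K j \<subseteq> Ucp K) \<Longrightarrow> (\<And>j. FX K j \<subseteq> Ucp K) \<Longrightarrow> LL (FY K) (FX K) j \<subseteq> Ucp K"
  by (auto simp: LL_def)

lemma Lab_LL: "Lab n j = LL (Yf {..<n}) (Xf {..<n}) j"
  by (auto simp: Lab_def LL_def Yf_def Xf_def)

lemma Ylab_Yf: "Ylab n j = Yf {..<n} j" by (auto simp: Ylab_def Yf_def)
lemma Xlab_Xf: "Xlab n j = Xf {..<n} j" by (auto simp: Xlab_def Xf_def)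

lemma loc_restr: "k < n \<Longrightarrow> loc k (restr (Ucp {..<n}) a) = loc k a"
  by (auto simp: loc_def restr_def Ucp_def fun_eq_iff)

lemma loc_restr2: "loc n (restr (- Ucp {..<n}) a) = loc n a"
  by (auto simp: loc_def restr_def Ucp_def fun_eq_iff)

lemma tensor_copies_Suc:
  "tensor_copies (Suc n) Q = tens (Ucp {..<n}) (tensor_copies n Q) (reloc n (Q n))"
  by (simp add: tensor_copies_def tens_def reloc_def fun_eq_iff loc_restr loc_restr2)

lemma loc_swc: "a \<in> basis d S \<Longrightarrow> S \<subseteq> Ucp {n} \<Longrightarrow> loc n a = a \<circ> swc n"
proof -
  assume a: "a \<in> basis d S" and S: "S \<subseteq> Ucp {n}"
  have z: "a (c, j, b) = 0" if "c \<noteq> n" for c j b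
  proof -
    have "(c, j, b) \<notin> S" using S that by (auto simp: Ucp_def)
    then show ?thesis using a by (simp add: basis_def)
  qed
  show ?thesis
  proof (rule ext)
    fix l :: lab
    obtain c j b where l: "l = (c, j, b)" by (cases l) auto
    show "loc n a l = (a \<circ> swc n) l"
      unfolding l loc_def swc_def using z by auto
  qed
qed

lemma op_eq_trans: "op_eq d S A B \<Longrightarrow> op_eq d S B C \<Longrightarrow> op_eq d S A C"
  by (simp add: op_eq_def)
lemma op_eq_sym: "op_eq d S A B \<Longrightarrow> op_eq d S B A"
  by (simp add: op_eq_def)

lemma ptrace_cong: "S \<inter> T = {} \<Longrightarrow> op_eq d (S \<union> T) M M' \<Longrightarrow> op_eq d S (ptrace d T M) (ptrace d T M')"
  unfolding op_eq_def ptrace_def by (simp add: join_in)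

lemma zero_on_in: "a \<in> basis d (S \<union> T) \<Longrightarrow> S \<inter> T = {} \<Longrightarrow> zero_on T a \<in> basis d S"
  by (auto simp: basis_def zero_on_def)

lemma ident_tensor_cong: "S \<inter> T = {} \<Longrightarrow> op_eq d S M M' \<Longrightarrow> op_eq d (S \<union> T) (ident_tensor T M) (ident_tensor T M')"
  unfolding op_eq_def ident_tensor_def by (simp add: zero_on_in)

lemma gstrat_cong:
  assumes w: "wf_fam r Y X" and G: "gstrat d r Y X Xs" and e: "\<And>j. j \<in> {1..r} \<Longrightarrow> op_eq d (LL Y X j) (Xs j) (Xs' j)"
    and r: "1 \<le> r"
  shows "gstrat d r Y X Xs'"
  unfolding gstrat_def
proof (intro conjI ballI)
  fix j assume j: "j \<in> {1..r}"
  have "psd d (LL Y X j) (Xs j)" using G j by (simp add: gstrat_def)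
  then show "psd d (LL Y X j) (Xs' j)" using e[OF j] psd_cong by blast
next
  have j1: "1 \<in> {1..r}" using r by simp
  have d1: "X 1 \<inter> Y 1 = {}" using wf_disj(3)[OF w j1] by blast
  have L1: "LL Y X 1 = X 1 \<union> Y 1" using LL_Suc[of Y X 0] by auto
  have "op_eq d (X 1) (ptrace d (Y 1) (Xs' 1)) (ptrace d (Y 1) (Xs 1))"
    by (rule ptrace_cong[OF d1]) (use e[OF j1] L1 op_eq_sym in metis)
  moreover have "op_eq d (X 1) (ptrace d (Y 1) (Xs 1)) (idop (X 1))" using G by (simp add: gstrat_def)
  ultimately show "op_eq d (X 1) (ptrace d (Y 1) (Xs' 1)) (idop (X 1))" by (rule op_eq_trans)
next
  fix j assume j2: "j \<in> {2..r}"
  then have j: "j \<in> {1..r}" and jp: "j - 1 \<in> {1..r}" by auto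
  have eq1: "LL Y X j - Y j = LL Y X (j - 1) \<union> X j" using LL_minus_Y[OF w j] .
  have eq2: "LL Y X j = (LL Y X j - Y j) \<union> Y j" using LL_sub[of j j Y X] j by auto
  have "op_eq d (LL Y X j - Y j) (ptrace d (Y j) (Xs' j)) (ptrace d (Y j) (Xs j))"
    by (rule ptrace_cong) (use e[OF j] eq2 op_eq_sym in \<open>auto\<close>)
  moreover have "op_eq d (LL Y X j - Y j) (ptrace d (Y j) (Xs j)) (ident_tensor (X j) (Xs (j - 1)))"
    using G j2 by (simp add: gstrat_def)
  moreover have "op_eq d (LL Y X j - Y j) (ident_tensor (X j) (Xs (j - 1))) (ident_tensor (X j) (Xs' (j - 1)))"
    unfolding eq1 by (rule ident_tensor_cong) (use wf_disj(2)[OF w j] e[OF jp] in auto)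
  ultimately show "op_eq d (LL Y X j - Y j) (ptrace d (Y j) (Xs' j)) (ident_tensor (X j) (Xs' (j - 1)))"
    by (meson op_eq_trans)
qed


lemma psd_empty_one: "psd d {} (\<lambda>_ _. 1)"
  unfolding psd_psdI psdI_def qf_def basis_empty by (simp add: nonneg_cnj_mult)

lemma gstrat_empty: "gstrat d r (\<lambda>_. {}) (\<lambda>_. {}) (\<lambda>j a b. 1)"
  unfolding gstrat_def
  by (auto simp: LL_def psd_empty_one op_eq_def ptrace_def basis_empty idop_def ident_tensor_def)

lemma gstrat_prod:
  fixes FY FX :: "nat set \<Rightarrow> nat \<Rightarrow> lab set"
  assumes r: "1 \<le> r"
    and hUY: "\<And>K1 K2 j. FY K1 j \<union> FY K2 j = FY (K1 \<union> K2) j"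
    and hUX: "\<And>K1 K2 j. FX K1 j \<union> FX K2 j = FX (K1 \<union> K2) j"
    and hSY: "\<And>n j. swc n ` FY {0} j = FY {n} j"
    and hSX: "\<And>n j. swc n ` FX {0} j = FX {n} j"
    and hCY: "\<And>K j. FY K j \<subseteq> Ucp K"
    and hCX: "\<And>K j. FX K j \<subseteq> Ucp K"
    and hW: "\<And>K. finite K \<Longrightarrow> wf_fam r (FY K) (FX K)"
    and G: "gstrat (dimf dx dy) r (FY {0}) (FX {0}) F"
  shows "gstrat (dimf dx dy) r (FY {..<n}) (FX {..<n}) (\<lambda>j. tensor_copies n (\<lambda>_. F j))"
proof (induction n)
  case 0
  have "FY {..<0} = (\<lambda>_. {})" "FX {..<0} = (\<lambda>_. {})" using hCY[of "{}"] hCX[of "{}"] by (auto simp: Ucp_def fun_eq_iff)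
  moreover have "(\<lambda>j. tensor_copies 0 (\<lambda>_. F j)) = (\<lambda>j a b. 1)" by (simp add: tensor_copies_def fun_eq_iff)
  ultimately show ?case by (simp add: gstrat_empty)
next
  case (Suc n)
  let ?d = "dimf dx dy"
  let ?U = "Ucp {..<n}"
  interpret iv: invol "swc n" ?d by (rule invol_swc)
  have B0: "gstrat ?d r (FY {n}) (FX {n}) (\<lambda>j. relab (swc n) (F j))"
    using iv.gstrat_relab[OF G] by (simp add: hSY hSX)
  have w1: "wf_fam r (FY {..<n}) (FX {..<n})" and w2: "wf_fam r (FY {n}) (FX {n})" using hW by auto
  have UU: "Ucp {n} \<inter> ?U = {}" by (auto simp: Ucp_def)
  have s: "sep r (FY {..<n}) (FX {..<n}) (FY {n}) (FX {n}) ?U"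
    unfolding sep_def using hCY hCX UU by blast
  have T: "gstrat ?d r (\<lambda>j. FY {..<n} j \<union> FY {n} j) (\<lambda>j. FX {..<n} j \<union> FX {n} j)
       (\<lambda>j. tens ?U (tensor_copies n (\<lambda>_. F j)) (relab (swc n) (F j)))"
    by (rule gstrat_tens[OF r w1 w2 s Suc B0])
  have un: "{..<n} \<union> {n} = {..<Suc n}" by auto
  have fam: "(\<lambda>j. FY {..<n} j \<union> FY {n} j) = FY {..<Suc n}" "(\<lambda>j. FX {..<n} j \<union> FX {n} j) = FX {..<Suc n}"
    by (simp_all add: hUY hUX lessThan_Suc fun_eq_iff)
  have wS: "wf_fam r (FY {..<Suc n}) (FX {..<Suc n})" using hW by simp
  show ?case
  proof (rule gstrat_cong[OF wS T[unfolded fam] _ r])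
    fix j assume j: "j \<in> {1..r}"
    have L1: "LL (FY {..<n}) (FX {..<n}) j \<subseteq> ?U" by (rule LL_U) (use hCY hCX in auto)
    have L2: "LL (FY {n}) (FX {n}) j \<subseteq> Ucp {n}" by (rule LL_U) (use hCY hCX in auto)
    have L2U: "LL (FY {n}) (FX {n}) j \<inter> ?U = {}" using L2 UU by blast
    have LS: "LL (FY {..<Suc n}) (FX {..<Suc n}) j = LL (FY {..<n}) (FX {..<n}) j \<union> LL (FY {n}) (FX {n}) j"
      using LL_un[of "FY {..<n}" "FY {n}" "FX {..<n}" "FX {n}" j] fam by simp
    show "op_eq ?d (LL (FY {..<Suc n}) (FX {..<Suc n}) j) (tens ?U (tensor_copies n (\<lambda>_. F j)) (relab (swc n) (F j)))
        (tensor_copies (Suc n) (\<lambda>_. F j))"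
      unfolding op_eq_def tensor_copies_Suc LS
    proof (intro ballI)
      fix a b assume a: "a \<in> basis ?d (LL (FY {..<n}) (FX {..<n}) j \<union> LL (FY {n}) (FX {n}) j)"
        and b: "b \<in> basis ?d (LL (FY {..<n}) (FX {..<n}) j \<union> LL (FY {n}) (FX {n}) j)"
      have a2: "restr (-?U) a \<in> basis ?d (LL (FY {n}) (FX {n}) j)" using restr_in_U2[OF a L1 L2U] .
      have b2: "restr (-?U) b \<in> basis ?d (LL (FY {n}) (FX {n}) j)" using restr_in_U2[OF b L1 L2U] .
      show "tens ?U (tensor_copies n (\<lambda>_. F j)) (relab (swc n) (F j)) a b = tens ?U (tensor_copies n (\<lambda>_. F j)) (reloc n (F j)) a b"
        unfolding tens_def relab_def reloc_def loc_swc[OF a2 L2] loc_swc[OF b2 L2] ..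
    qed
  qed
qed


lemma strategy_iff:
  "strategy d r n X \<longleftrightarrow> psd d (Lab n r) X \<and> (\<exists>Xs. gstrat d r (Yf {..<n}) (Xf {..<n}) Xs \<and> op_eq d (Lab n r) (Xs r) X)"
  unfolding strategy_def gstrat_def Lab_LL Ylab_Yf Xlab_Xf by blast

lemma LL_1: "LL (Yf {..<Suc 0}) (Xf {..<Suc 0}) j = LL (Yf {0}) (Xf {0}) j"
  by (simp add: lessThan_Suc)

lemma LL_YX: "LL (Yf K) (Xf K) j = {(k, j', b). k \<in> K \<and> 1 \<le> j' \<and> j' \<le> j}"
  by (auto simp: LL_def Yf_def Xf_def)

lemma RL_eq: "1 \<le> j \<Longrightarrow> LL (Xf {0}) (SYf {0}) j = RL j"
proof -
  assume j: "1 \<le> j"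
  have "LL (Xf {0}) (SYf {0}) j = LL (Yf {0}) (Xf {0}) (j - 1) \<union> Xf {0} j"
    unfolding SYf_def using LL_shift[OF j] .
  also have "\<dots> = RL j"
    using j unfolding LL_YX by (auto simp: Xf_def RL_def split: if_splits)
  finally show ?thesis .
qed

lemma basis_join0: "c \<in> basis d T \<Longrightarrow> join T (\<lambda>_. 0) c = c"
  by (auto simp: basis_def join_def fun_eq_iff)

lemma verifier_gstrat:
  assumes r: "1 \<le> r" and V: "verifier d r t P"
  shows "\<exists>R. gstrat d r (Xf {0}) (SYf {0}) R \<and>
     op_eq d (LL (Yf {0}) (Xf {0}) r) (\<lambda>a b. \<Sum>i<t. P i a b) (ident_tensor (Yf {0} r) (R r))"
proof -
  obtain R where R1: "psd d (Xlab 1 1) (R 1)" and tr1: "tr d (Xlab 1 1) (R 1) = 1"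
    and Rp: "\<forall>j\<in>{2..r}. psd d (RL j) (R j)"
    and Rc: "\<forall>j\<in>{1..r-1}. op_eq d (RL j \<union> Ylab 1 j) (ptrace d (Xlab 1 (j+1)) (R (j+1))) (ident_tensor (Ylab 1 j) (R j))"
    and Rs: "op_eq d (Lab 1 r) (\<lambda>a b. \<Sum>i<t. P i a b) (ident_tensor (Ylab 1 r) (R r))"
    using V unfolding verifier_def by blast
  have X1: "Xlab 1 j = Xf {0} j" for j by (simp add: Xlab_Xf lessThan_Suc)
  have Y1: "Ylab 1 j = Yf {0} j" for j by (simp add: Ylab_Yf lessThan_Suc)
  have L1: "Lab 1 j = LL (Yf {0}) (Xf {0}) j" for j by (simp add: Lab_LL lessThan_Suc)
  have G: "gstrat d r (Xf {0}) (SYf {0}) R"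
    unfolding gstrat_def
  proof (intro conjI ballI)
    fix j assume j: "j \<in> {1..r}"
    show "psd d (LL (Xf {0}) (SYf {0}) j) (R j)"
    proof (cases "j = 1")
      case True
      have "RL 1 = Xlab 1 1" by (auto simp: RL_def Xlab_def)
      then show ?thesis using R1 True RL_eq[of 1] by simp
    next
      case False then show ?thesis using Rp j RL_eq[of j] by auto
    qed
  next
    show "op_eq d (SYf {0} 1) (ptrace d (Xf {0} 1) (R 1)) (idop (SYf {0} 1))"
      using tr1 unfolding op_eq_def SYf_def shiftY_def tr_def ptrace_def X1
      by (simp add: basis_empty idop_def basis_join0 cong: sum.cong)
  next
    fix j assume j: "j \<in> {2..r}"
    then have jm: "j - 1 \<in> {1..r-1}" and jj: "j - 1 + 1 = j" by auto
    have rl: "LL (Xf {0}) (SYf {0}) j = RL j" using RL_eq[of j] j by simp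
    have e: "LL (Xf {0}) (SYf {0}) j - Xf {0} j = RL (j - 1) \<union> Ylab 1 (j - 1)"
      using j unfolding rl by (auto simp: RL_def Xf_def Ylab_def split: if_splits)
    have s: "SYf {0} j = Ylab 1 (j - 1)" using j Y1[of "j - 1"] by (simp add: SYf_def shiftY_def)
    show "op_eq d (LL (Xf {0}) (SYf {0}) j - Xf {0} j) (ptrace d (Xf {0} j) (R j)) (ident_tensor (SYf {0} j) (R (j - 1)))"
      unfolding e s using Rc jm jj X1 by metis
  qed
  show ?thesis using G Rs unfolding L1 Y1 by blast
qed


lemma inner_tens1:
  assumes f: "finite S1" "finite S2" "S1 \<inter> S2 = {}" and U: "S1 \<subseteq> U" "S2 \<inter> U = {}"
  shows "inner_op d (S1 \<union> S2) (tens U A B) X = inner_op d S1 A (red d S2 B X)"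
proof -
  have "inner_op d (S1 \<union> S2) (tens U A B) X = (\<Sum>a\<in>basis d S1. \<Sum>c\<in>basis d S2. \<Sum>b\<in>basis d S1. \<Sum>e\<in>basis d S2.
      cnj (A a b) * (cnj (B c e) * X (join S2 a c) (join S2 b e)))"
    unfolding inner_op_def sum_split[OF f]
    by (intro sum.cong refl) (simp add: tens_def restr_join_U1 restr_join_U2 U)
  also have "\<dots> = (\<Sum>a\<in>basis d S1. \<Sum>b\<in>basis d S1. \<Sum>c\<in>basis d S2. \<Sum>e\<in>basis d S2.
      cnj (A a b) * (cnj (B c e) * X (join S2 a c) (join S2 b e)))"
    by (rule sum_swap_mid)
  also have "\<dots> = inner_op d S1 A (red d S2 B X)"
    unfolding inner_op_def red_def by (simp add: sum_distrib_left)
  finally show ?thesis .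
qed

lemma tens_comm: "tens U A B = tens (-U) B A"
  by (simp add: tens_def fun_eq_iff mult.commute)

lemma inner_tens2:
  assumes f: "finite S1" "finite S2" "S1 \<inter> S2 = {}" and U: "S1 \<subseteq> U" "S2 \<inter> U = {}"
  shows "inner_op d (S1 \<union> S2) (tens U A B) X = inner_op d S2 B (red d S1 A X)"
proof -
  have "inner_op d (S2 \<union> S1) (tens (-U) B A) X = inner_op d S2 B (red d S1 A X)"
    by (rule inner_tens1) (use f U in auto)
  then show ?thesis by (simp add: tens_comm[of U A B] Un_commute)
qed

lemma inner_sum1: "inner_op d S (\<lambda>a b. \<Sum>i\<in>I. F i a b) X = (\<Sum>i\<in>I. inner_op d S (F i) X)"
proof -
  have "inner_op d S (\<lambda>a b. \<Sum>i\<in>I. F i a b) X = (\<Sum>a\<in>basis d S. \<Sum>b\<in>basis d S. \<Sum>i\<in>I. cnj (F i a b) * X a b)"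
    unfolding inner_op_def by (simp add: sum_distrib_right)
  also have "\<dots> = (\<Sum>i\<in>I. inner_op d S (F i) X)" unfolding inner_op_def by (rule sum_swap3)
  finally show ?thesis .
qed

lemma inner_sum2: "inner_op d S A (\<lambda>a b. \<Sum>i\<in>I. F i a b) = (\<Sum>i\<in>I. inner_op d S A (F i))"
proof -
  have "inner_op d S A (\<lambda>a b. \<Sum>i\<in>I. F i a b) = (\<Sum>a\<in>basis d S. \<Sum>b\<in>basis d S. \<Sum>i\<in>I. cnj (A a b) * F i a b)"
    unfolding inner_op_def by (simp add: sum_distrib_left)
  also have "\<dots> = (\<Sum>i\<in>I. inner_op d S A (F i))" unfolding inner_op_def by (rule sum_swap3)
  finally show ?thesis .
qed

lemma red_sum: "red d S (\<lambda>a b. \<Sum>i\<in>I. F i a b) X a b = (\<Sum>i\<in>I. red d S (F i) X a b)"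
proof -
  have "red d S (\<lambda>a b. \<Sum>i\<in>I. F i a b) X a b = (\<Sum>c\<in>basis d S. \<Sum>e\<in>basis d S. \<Sum>i\<in>I. cnj (F i c e) * X (join S a c) (join S b e))"
    unfolding red_def by (simp add: sum_distrib_right)
  also have "\<dots> = (\<Sum>i\<in>I. red d S (F i) X a b)" unfolding red_def by (rule sum_swap3)
  finally show ?thesis .
qed

lemma inner_cong: "op_eq d S X X' \<Longrightarrow> inner_op d S A X = inner_op d S A X'"
  unfolding op_eq_def inner_op_def by simp

lemma inner_cong1: "op_eq d S A A' \<Longrightarrow> inner_op d S A X = inner_op d S A' X"
  unfolding op_eq_def inner_op_def by simp

lemma sum_PiE_Suc:
  "(\<Sum>g\<in>PiE {..<Suc n} (\<lambda>_. A). f g) = (\<Sum>g\<in>PiE {..<n} (\<lambda>_. A). \<Sum>y\<in>A. f (g(n := y)))"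
proof -
  have "(\<Sum>g\<in>PiE (insert n {..<n}) (\<lambda>_. A). f g) = (\<Sum>(y,g)\<in>A \<times> PiE {..<n} (\<lambda>_. A). f (g(n := y)))"
    by (rule sum.reindex_bij_witness[of _ "\<lambda>(y,g). g(n := y)" "\<lambda>g. (g n, g(n := undefined))"])
       (auto simp: PiE_def extensional_def)
  also have "\<dots> = (\<Sum>y\<in>A. \<Sum>g\<in>PiE {..<n} (\<lambda>_. A). f (g(n := y)))"
    by (rule sum.cartesian_product[symmetric])
  also have "\<dots> = (\<Sum>g\<in>PiE {..<n} (\<lambda>_. A). \<Sum>y\<in>A. f (g(n := y)))"
    by (rule sum.swap)
  finally show ?thesis by (simp add: lessThan_Suc)
qed

lemma tc_sum:
  "(\<Sum>g\<in>PiE {..<n} (\<lambda>_. {..<t::nat}). tensor_copies n (\<lambda>k. P (g k)) a b) = tensor_copies n (\<lambda>_. \<lambda>a b. \<Sum>s<t. P s a b) a b"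
  unfolding tensor_copies_def by (rule prod_sum_PiE[symmetric]) auto

lemma tc_cong: "(\<And>k. k < n \<Longrightarrow> Q k = Q' k) \<Longrightarrow> tensor_copies n Q = tensor_copies n Q'"
  unfolding tensor_copies_def by (auto simp: fun_eq_iff intro!: prod.cong)


definition Sn :: "(lab \<Rightarrow> nat) \<Rightarrow> nat \<Rightarrow> nat \<Rightarrow> (nat \<Rightarrow> real) \<Rightarrow> (nat \<Rightarrow> lab op) \<Rightarrow> nat \<Rightarrow> lab op \<Rightarrow> complex" where
  "Sn d r t vals P n X = (\<Sum>g\<in>PiE {..<n} (\<lambda>_. {..<t}).
      complex_of_real (\<Sum>k<n. vals (g k)) * inner_op d (Lab n r) (tensor_copies n (\<lambda>k. P (g k))) X)"

definition Cn :: "nat \<Rightarrow> nat \<Rightarrow> lab set" where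
  "Cn n r = LL (Yf {n}) (Xf {n}) r"

lemma Lab_Suc: "Lab (Suc n) r = Lab n r \<union> Cn n r"
  unfolding Lab_LL Cn_def LL_un[symmetric] Yf_un Xf_un by (simp add: lessThan_Suc)

lemma Lab_fin: "finite (Lab n r)"
  unfolding Lab_LL by (rule wf_finite_LL[OF wf_YX]) auto

lemma Cn_fin: "finite (Cn n r)"
  unfolding Cn_def by (rule wf_finite_LL[OF wf_YX]) auto

lemma Lab_U: "Lab n r \<subseteq> Ucp {..<n}"
  unfolding Lab_LL by (rule LL_U[of Yf "{..<n}" Xf]) (simp_all add: Yf_U Xf_U)

lemma Cn_U: "Cn n r \<subseteq> Ucp {n}"
  unfolding Cn_def by (rule LL_U[of Yf "{n}" Xf]) (simp_all add: Yf_U Xf_U)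

lemma Cn_U2: "Cn n r \<inter> Ucp {..<n} = {}"
  using Cn_U[of n r] by (auto simp: Ucp_def)

lemma Lab_Cn: "Lab n r \<inter> Cn n r = {}"
  using Lab_U[of n r] Cn_U2[of n r] by blast

lemma Sn_cong: "op_eq d (Lab n r) X X' \<Longrightarrow> Sn d r t vals P n X = Sn d r t vals P n X'"
  unfolding Sn_def using inner_cong by (metis (no_types, lifting))

lemma Sn_0: "Sn d r t vals P 0 X = 0"
  by (simp add: Sn_def)

lemma DEC:
  fixes d :: "lab \<Rightarrow> nat" and t :: nat and P :: "nat \<Rightarrow> lab op"
  defines "SP \<equiv> (\<lambda>a b. \<Sum>s<t. P s a b)"
  shows "Sn d r t vals P (Suc n) X = Sn d r t vals P n (red d (Cn n r) (reloc n SP) X)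
     + (\<Sum>s<t. complex_of_real (vals s) * inner_op d (Cn n r) (reloc n (P s)) (red d (Lab n r) (tensor_copies n (\<lambda>_. SP)) X))"
proof -
  let ?U = "Ucp {..<n}"
  let ?A = "\<lambda>g. tensor_copies n (\<lambda>k. P (g k))"
  have f: "finite (Lab n r)" "finite (Cn n r)" "Lab n r \<inter> Cn n r = {}" and U: "Lab n r \<subseteq> ?U" "Cn n r \<inter> ?U = {}"
    using Lab_fin Cn_fin Lab_Cn Lab_U Cn_U2 by auto
  have tm: "complex_of_real (\<Sum>k<Suc n. vals ((g(n := y)) k)) * inner_op d (Lab (Suc n) r) (tensor_copies (Suc n) (\<lambda>k. P ((g(n := y)) k))) X
     = complex_of_real (\<Sum>k<n. vals (g k)) * inner_op d (Lab n r) (?A g) (red d (Cn n r) (reloc n (P y)) X)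
       + complex_of_real (vals y) * inner_op d (Cn n r) (reloc n (P y)) (red d (Lab n r) (?A g) X)" for g y
  proof -
    have s: "(\<Sum>k<Suc n. vals ((g(n := y)) k)) = (\<Sum>k<n. vals (g k)) + vals y" by simp
    have tc: "tensor_copies (Suc n) (\<lambda>k. P ((g(n := y)) k)) = tens ?U (?A g) (reloc n (P y))"
    proof -
      have "tensor_copies n (\<lambda>k. P ((g(n := y)) k)) = ?A g" by (rule tc_cong) simp
      then show ?thesis unfolding tensor_copies_Suc by simp
    qed
    show ?thesis unfolding s tc Lab_Suc inner_tens1[OF f U, symmetric] inner_tens2[OF f U, symmetric]
      by (simp add: algebra_simps)
  qed
  have "Sn d r t vals P (Suc n) X = (\<Sum>g\<in>PiE {..<n} (\<lambda>_. {..<t}). \<Sum>y<t.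
       complex_of_real (\<Sum>k<n. vals (g k)) * inner_op d (Lab n r) (?A g) (red d (Cn n r) (reloc n (P y)) X)
       + complex_of_real (vals y) * inner_op d (Cn n r) (reloc n (P y)) (red d (Lab n r) (?A g) X))"
    unfolding Sn_def sum_PiE_Suc tm ..
  also have "\<dots> = (\<Sum>g\<in>PiE {..<n} (\<lambda>_. {..<t}). \<Sum>y<t.
       complex_of_real (\<Sum>k<n. vals (g k)) * inner_op d (Lab n r) (?A g) (red d (Cn n r) (reloc n (P y)) X))
     + (\<Sum>g\<in>PiE {..<n} (\<lambda>_. {..<t}). \<Sum>y<t.
       complex_of_real (vals y) * inner_op d (Cn n r) (reloc n (P y)) (red d (Lab n r) (?A g) X))"
    by (simp add: sum.distrib)
  also have "(\<Sum>g\<in>PiE {..<n} (\<lambda>_. {..<t}). \<Sum>y<t.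
       complex_of_real (\<Sum>k<n. vals (g k)) * inner_op d (Lab n r) (?A g) (red d (Cn n r) (reloc n (P y)) X))
     = Sn d r t vals P n (red d (Cn n r) (reloc n SP) X)"
    unfolding Sn_def
  proof (intro sum.cong refl)
    fix g
    have "red d (Cn n r) (reloc n SP) X = (\<lambda>a b. \<Sum>y<t. red d (Cn n r) (reloc n (P y)) X a b)"
      by (simp add: fun_eq_iff red_sum[symmetric] reloc_def SP_def)
    then show "(\<Sum>y<t. complex_of_real (\<Sum>k<n. vals (g k)) * inner_op d (Lab n r) (?A g) (red d (Cn n r) (reloc n (P y)) X))
       = complex_of_real (\<Sum>k<n. vals (g k)) * inner_op d (Lab n r) (?A g) (red d (Cn n r) (reloc n SP) X)"
      by (simp add: inner_sum2 sum_distrib_left)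
  qed
  also have "(\<Sum>g\<in>PiE {..<n} (\<lambda>_. {..<t}). \<Sum>y<t.
       complex_of_real (vals y) * inner_op d (Cn n r) (reloc n (P y)) (red d (Lab n r) (?A g) X))
     = (\<Sum>y<t. \<Sum>g\<in>PiE {..<n} (\<lambda>_. {..<t}).
       complex_of_real (vals y) * inner_op d (Cn n r) (reloc n (P y)) (red d (Lab n r) (?A g) X))"
    by (rule sum.swap)
  also have "\<dots> = (\<Sum>s<t. complex_of_real (vals s) * inner_op d (Cn n r) (reloc n (P s)) (red d (Lab n r) (tensor_copies n (\<lambda>_. SP)) X))"
  proof (intro sum.cong refl)
    fix y
    have "red d (Lab n r) (tensor_copies n (\<lambda>_. SP)) X = (\<lambda>a b. \<Sum>g\<in>PiE {..<n} (\<lambda>_. {..<t}). red d (Lab n r) (?A g) X a b)"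
      by (simp add: fun_eq_iff red_sum[symmetric] tc_sum SP_def)
    then show "(\<Sum>g\<in>PiE {..<n} (\<lambda>_. {..<t}). complex_of_real (vals y) * inner_op d (Cn n r) (reloc n (P y)) (red d (Lab n r) (?A g) X))
      = complex_of_real (vals y) * inner_op d (Cn n r) (reloc n (P y)) (red d (Lab n r) (tensor_copies n (\<lambda>_. SP)) X)"
      by (simp add: inner_sum2 sum_distrib_left)
  qed
  finally show ?thesis .
qed


lemma wf_empty: "wf_fam r (\<lambda>_. {}) (\<lambda>_. {})" by (simp add: wf_fam_def)

lemma LL_empty: "LL (\<lambda>_. {}) (\<lambda>_. {}) j = {}" by (simp add: LL_def)

lemma NORM:
  assumes r: "1 \<le> r" and w: "wf_fam r Y X" and Xs: "gstrat d r Y X Xs" and R: "gstrat d r X (shiftY Y) R"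
  shows "inner_op d (LL Y X r) (ident_tensor (Y r) (R r)) (Xs r) = 1"
proof -
  define Z where "Z j = red d (LL Y X j - Y j) (R j) (ptrace d (Y j) (Xs j))" for j
  have s: "sep r (\<lambda>_. {}) (\<lambda>_. {}) Y X {}" by (simp add: sep_def)
  have Xs': "gstrat d r (\<lambda>j. {} \<union> Y j) (\<lambda>j. {} \<union> X j) Xs" using Xs by simp
  have G: "gstrat d r (\<lambda>_. {}) (\<lambda>_. {}) Z"
    using gstrat_red[OF r wf_empty w s Xs' R] unfolding Z_def .
  have z0: "(\<lambda>_. 0) \<in> basis d {}" by (simp add: basis_empty)
  have ptr0: "ptrace d {} M (\<lambda>_. 0) (\<lambda>_. 0) = M (\<lambda>_. 0) (\<lambda>_. 0)" for M
    by (simp add: ptrace_def basis_empty join_def)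
  have Z1: "j \<in> {1..r} \<Longrightarrow> Z j (\<lambda>_. 0) (\<lambda>_. 0) = 1" for j
  proof (induction j)
    case 0 then show ?case by simp
  next
    case (Suc j)
    show ?case
    proof (cases "j = 0")
      case True
      have "op_eq d {} (ptrace d {} (Z 1)) (idop {})" using G unfolding gstrat_def by simp
      then have h: "\<forall>a\<in>basis d {}. \<forall>b\<in>basis d {}. ptrace d {} (Z 1) a b = idop {} a b" by (simp add: op_eq_def)
      have "ptrace d {} (Z 1) (\<lambda>_. 0) (\<lambda>_. 0) = 1" using bspec[OF bspec[OF h z0] z0] by (simp add: idop_def)
      then show ?thesis using True by (simp add: ptr0 idop_def)
    next
      case False
      then have "Suc j \<in> {2..r}" "j \<in> {1..r}" using Suc.prems by auto
      then have "ptrace d {} (Z (Suc j)) (\<lambda>_. 0) (\<lambda>_. 0) = ident_tensor {} (Z j) (\<lambda>_. 0) (\<lambda>_. 0)"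
        using G unfolding gstrat_def op_eq_def LL_empty by (simp add: basis_empty)
      then show ?thesis using Suc.IH \<open>j \<in> {1..r}\<close> by (simp add: ptr0 ident_tensor_def idop_def zero_on_def)
    qed
  qed
  have rr: "r \<in> {1..r}" using r by simp
  have e: "LL Y X r = (LL Y X r - Y r) \<union> Y r" using LL_sub[of r r Y X] r by auto
  have "red d (LL Y X r) (ident_tensor (Y r) (R r)) (Xs r) (\<lambda>_. 0) (\<lambda>_. 0) = Z r (\<lambda>_. 0) (\<lambda>_. 0)"
    unfolding Z_def by (subst e, rule red_ident_tensor) (use wf_finite_LL[OF w] wf_finite[OF w rr] in auto)
  moreover have "red d (LL Y X r) (ident_tensor (Y r) (R r)) (Xs r) (\<lambda>_. 0) (\<lambda>_. 0) = inner_op d (LL Y X r) (ident_tensor (Y r) (R r)) (Xs r)"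
    unfolding red_def inner_op_def by (intro sum.cong refl) (simp add: basis_join0)
  ultimately show ?thesis using Z1[OF rr] by simp
qed

lemma red_tens1:
  assumes U: "S1 \<subseteq> U" "S2 \<inter> U = {}" and a: "a \<in> basis d S1" and b: "b \<in> basis d S1"
  shows "red d S2 Q (tens U A B) a b = A a b * inner_op d S2 Q B"
  unfolding red_def inner_op_def sum_distrib_left
  by (intro sum.cong refl) (simp add: tens_def restr_join_U1[OF a _ U] restr_join_U1[OF b _ U]
        restr_join_U2[OF a _ U] restr_join_U2[OF b _ U])

lemma red_tens2:
  assumes U: "S1 \<subseteq> U" "S2 \<inter> U = {}" and a: "c \<in> basis d S2" and b: "e \<in> basis d S2"
  shows "red d S1 Q (tens U A B) c e = inner_op d S1 Q A * B c e"
proof -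
  have "red d S1 Q (tens (-U) B A) c e = B c e * inner_op d S1 Q A"
    by (rule red_tens1) (use U a b in auto)
  then show ?thesis by (simp add: tens_comm[of U A B] mult.commute)
qed

lemma Cn_img: "swc n ` Lab 1 r = Cn n r"
proof -
  interpret iv: invol "swc n" "dimf dx dy" by (rule invol_swc)
  show ?thesis by (simp add: Cn_def Lab_LL lessThan_Suc iv.LL_img[symmetric] Yf_swc Xf_swc)
qed


lemma prod_if01: "(\<Prod>k<(n::nat). (if P k then 1 else 0) :: complex) = (if \<forall>k<n. P k then 1 else 0)"
  by (induction n) (auto simp: less_Suc_eq)

lemma TC_ident:
  "tensor_copies n (\<lambda>_. ident_tensor (Yf {0} j) M) = ident_tensor (Yf {..<n} j) (tensor_copies n (\<lambda>_. M))"
proof (intro ext)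
  fix a b
  have z: "zero_on (Yf {0} j) (loc k a) = loc k (zero_on (Yf {..<n} j) a)" if "k < n" for k a
    using that by (auto simp: zero_on_def loc_def Yf_def fun_eq_iff)
  have i: "(\<Prod>k<n. idop (Yf {0} j) (loc k a) (loc k b)) = idop (Yf {..<n} j) a b"
    unfolding idop_def prod_if01 by (auto simp: loc_def Yf_def)
  have "tensor_copies n (\<lambda>_. ident_tensor (Yf {0} j) M) a b
      = (\<Prod>k<n. idop (Yf {0} j) (loc k a) (loc k b)) * (\<Prod>k<n. M (zero_on (Yf {0} j) (loc k a)) (zero_on (Yf {0} j) (loc k b)))"
    by (simp add: tensor_copies_def ident_tensor_def prod.distrib)
  also have "\<dots> = idop (Yf {..<n} j) a b * (\<Prod>k<n. M (loc k (zero_on (Yf {..<n} j) a)) (loc k (zero_on (Yf {..<n} j) b)))"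
  proof -
    have "(\<Prod>k<n. M (zero_on (Yf {0} j) (loc k a)) (zero_on (Yf {0} j) (loc k b)))
        = (\<Prod>k<n. M (loc k (zero_on (Yf {..<n} j) a)) (loc k (zero_on (Yf {..<n} j) b)))"
      by (rule prod.cong) (simp_all add: z)
    then show ?thesis unfolding i by simp
  qed
  finally show "tensor_copies n (\<lambda>_. ident_tensor (Yf {0} j) M) a b = ident_tensor (Yf {..<n} j) (tensor_copies n (\<lambda>_. M)) a b"
    by (simp add: ident_tensor_def tensor_copies_def)
qed

lemma loc_in: "a \<in> basis (dimf dx dy) (Lab n r) \<Longrightarrow> k < n \<Longrightarrow> loc k a \<in> basis (dimf dx dy) (Lab 1 r)"
  by (auto simp: basis_def loc_def Lab_def dimf_def split: prod.splits)

lemma TC_cong_basis: "op_eq (dimf dx dy) (Lab 1 r) A B \<Longrightarrow> op_eq (dimf dx dy) (Lab n r) (tensor_copies n (\<lambda>_. A)) (tensor_copies n (\<lambda>_. B))"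
  unfolding op_eq_def tensor_copies_def
proof (intro ballI prod.cong refl)
  fix a b k assume h: "\<forall>a\<in>basis (dimf dx dy) (Lab 1 r). \<forall>b\<in>basis (dimf dx dy) (Lab 1 r). A a b = B a b"
    and a: "a \<in> basis (dimf dx dy) (Lab n r)" and b: "b \<in> basis (dimf dx dy) (Lab n r)" and k: "k \<in> {..<n}"
  show "A (loc k a) (loc k b) = B (loc k a) (loc k b)"
    using h loc_in[OF a] loc_in[OF b] k by simp
qed

lemma reloc_relab_op: "op_eq d (Cn n r) (reloc n M) (relab (swc n) M)"
  unfolding op_eq_def reloc_def relab_def using loc_swc[OF _ Cn_U] by simp

lemma Lab1_img: "swc n ` Cn n r = Lab 1 r"
proof -
  interpret iv: invol "swc n" "dimf dx dy" by (rule invol_swc)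
  have "swc n ` swc n ` Lab 1 r = Lab 1 r" by (simp add: image_comp comp_def)
  then show ?thesis using Cn_img by simp
qed

lemma inner_reloc:
  "inner_op (dimf dx dy) (Cn n r) (reloc n A) M = inner_op (dimf dx dy) (Lab 1 r) A (relab (swc n) M)"
proof -
  interpret iv: invol "swc n" "dimf dx dy" by (rule invol_swc)
  have rr: "relab (swc n) (relab (swc n) M) = M" by (simp add: relab_def comp_def fun_eq_iff o_def)
  have "inner_op (dimf dx dy) (Cn n r) (reloc n A) M = inner_op (dimf dx dy) (Cn n r) (relab (swc n) A) M"
    by (rule inner_cong1[OF reloc_relab_op])
  also have "\<dots> = inner_op (dimf dx dy) (swc n ` Lab 1 r) (relab (swc n) A) (relab (swc n) (relab (swc n) M))"
    unfolding rr Cn_img ..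
  also have "\<dots> = inner_op (dimf dx dy) (Lab 1 r) A (relab (swc n) M)" by (rule iv.inner_relab)
  finally show ?thesis .
qed


definition V1 :: "(lab \<Rightarrow> nat) \<Rightarrow> nat \<Rightarrow> nat \<Rightarrow> (nat \<Rightarrow> real) \<Rightarrow> (nat \<Rightarrow> lab op) \<Rightarrow> lab op \<Rightarrow> complex" where
  "V1 d r t vals P Y = (\<Sum>i<t. complex_of_real (vals i) * inner_op d (Lab 1 r) (P i) Y)"

lemma swc_swc: "swc n (swc n l) = l"
  by (auto simp: swc_def split: prod.splits)

lemma Yf_swc_back: "swc n ` Yf {n} j = Yf {0} j"
proof -
  have "swc n ` Yf {n} j = swc n ` (swc n ` Yf {0} j)" by (simp only: Yf_swc)
  also have "\<dots> = Yf {0} j" by (simp add: image_comp comp_def swc_swc)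
  finally show ?thesis .
qed

lemma Xf_swc_back: "swc n ` Xf {n} j = Xf {0} j"
proof -
  have "swc n ` Xf {n} j = swc n ` (swc n ` Xf {0} j)" by (simp only: Xf_swc)
  also have "\<dots> = Xf {0} j" by (simp add: image_comp comp_def swc_swc)
  finally show ?thesis .
qed

lemma fam_un1: "(\<lambda>j. Yf {..<n} j \<union> Yf {n} j) = Yf {..<Suc n}" "(\<lambda>j. Xf {..<n} j \<union> Xf {n} j) = Xf {..<Suc n}"
  by (auto simp: Yf_def Xf_def fun_eq_iff)

lemma fam_un2: "(\<lambda>j. Yf {n} j \<union> Yf {..<n} j) = Yf {..<Suc n}" "(\<lambda>j. Xf {n} j \<union> Xf {..<n} j) = Xf {..<Suc n}"
  by (auto simp: Yf_def Xf_def fun_eq_iff)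

lemma sepA: "sep r (Yf {..<n}) (Xf {..<n}) (Yf {n}) (Xf {n}) (Ucp {..<n})"
  unfolding sep_def using Yf_U Xf_U by (fastforce simp: Ucp_def Yf_def Xf_def)

lemma sepB: "sep r (Yf {n}) (Xf {n}) (Yf {..<n}) (Xf {..<n}) (Ucp {n})"
  unfolding sep_def using Yf_U Xf_U by (fastforce simp: Ucp_def Yf_def Xf_def)

lemma RR_gstrat:
  assumes r1: "1 \<le> r" and Rg: "gstrat (dimf dx dy) r (Xf {0}) (SYf {0}) R"
  shows "gstrat (dimf dx dy) r (Xf {..<n}) (shiftY (Yf {..<n})) (\<lambda>j. tensor_copies n (\<lambda>_. R j))"
  using gstrat_prod[of r Xf SYf dx dy R n, OF r1 Xf_un SYf_un Xf_swc SYf_swc Xf_U SYf_U wf_XSY Rg]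
  by (simp add: SYf_def)

lemma R_relab:
  assumes Rg: "gstrat (dimf dx dy) r (Xf {0}) (SYf {0}) R"
  shows "gstrat (dimf dx dy) r (Xf {n}) (shiftY (Yf {n})) (\<lambda>j. relab (swc n) (R j))"
proof -
  interpret iv: invol "swc n" "dimf dx dy" by (rule invol_swc)
  show ?thesis using iv.gstrat_relab[OF Rg] unfolding Xf_swc SYf_swc by (simp add: SYf_def)
qed

lemma strat_from_gstrat:
  assumes "gstrat d r (Yf {..<n}) (Xf {..<n}) Xs" "1 \<le> r"
  shows "strategy d r n (Xs r)"
  unfolding strategy_iff using assms by (auto simp: gstrat_def Lab_LL op_eq_def)


lemma STEP:
  assumes r1: "1 \<le> r" and Rg: "gstrat (dimf dx dy) r (Xf {0}) (SYf {0}) R"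
    and RS: "op_eq (dimf dx dy) (Lab 1 r) (\<lambda>a b. \<Sum>s<t. P s a b) (ident_tensor (Yf {0} r) (R r))"
    and X: "strategy (dimf dx dy) r (Suc n) X"
  shows "\<exists>X' Y. strategy (dimf dx dy) r n X' \<and> strategy (dimf dx dy) r 1 Y \<and>
     Sn (dimf dx dy) r t vals P (Suc n) X = Sn (dimf dx dy) r t vals P n X' + V1 (dimf dx dy) r t vals P Y"
proof -
  let ?d = "dimf dx dy"
  let ?SP = "\<lambda>a b. \<Sum>s<t. P s a b"
  interpret iv: invol "swc n" ?d by (rule invol_swc)
  obtain Xs where Xs: "gstrat ?d r (Yf {..<Suc n}) (Xf {..<Suc n}) Xs" and XX: "op_eq ?d (Lab (Suc n) r) (Xs r) X"
    using X unfolding strategy_iff by blast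
  have SnX: "Sn ?d r t vals P (Suc n) X = Sn ?d r t vals P (Suc n) (Xs r)"
    by (rule Sn_cong) (rule op_eq_sym[OF XX])
  have rr: "r \<in> {1..r}" using r1 by simp
  define Z where "Z j = red ?d (LL (Yf {n}) (Xf {n}) j - Yf {n} j) (relab (swc n) (R j)) (ptrace ?d (Yf {n} j) (Xs j))" for j
  have Ga: "gstrat ?d r (Yf {..<n}) (Xf {..<n}) Z"
    unfolding Z_def
    by (rule gstrat_red[OF r1 wf_YX wf_YX sepA _ R_relab[OF Rg]]) (use Xs in \<open>simp_all add: fam_un1\<close>)
  have SX': "strategy ?d r n (Z r)" by (rule strat_from_gstrat[OF Ga r1])
  have fC: "finite (Cn n r - Yf {n} r)" "finite (Yf {n} r)" using Cn_fin wf_finite[OF wf_YX[of "{n}"] rr] by auto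
  have CY: "Cn n r = (Cn n r - Yf {n} r) \<union> Yf {n} r"
    unfolding Cn_def using LL_sub[of r r "Yf {n}" "Xf {n}"] r1 by auto
  have partA: "Sn ?d r t vals P n (red ?d (Cn n r) (reloc n ?SP) (Xs r)) = Sn ?d r t vals P n (Z r)"
  proof (rule Sn_cong, unfold op_eq_def, intro ballI)
    fix a b
    have "red ?d (Cn n r) (reloc n ?SP) (Xs r) a b = red ?d (Cn n r) (ident_tensor (Yf {n} r) (relab (swc n) (R r))) (Xs r) a b"
    proof (rule red_cong)
      fix c e assume c: "c \<in> basis ?d (Cn n r)" and e: "e \<in> basis ?d (Cn n r)"
      have "reloc n ?SP c e = relab (swc n) ?SP c e" using reloc_relab_op c e unfolding op_eq_def by blast
      also have "\<dots> = relab (swc n) (ident_tensor (Yf {0} r) (R r)) c e"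
        using iv.op_eq_relab[OF RS] c e unfolding Cn_img[symmetric] op_eq_def by blast
      also have "\<dots> = ident_tensor (Yf {n} r) (relab (swc n) (R r)) c e"
        by (simp add: iv.ident_tensor_relab Yf_swc)
      finally show "reloc n ?SP c e = ident_tensor (Yf {n} r) (relab (swc n) (R r)) c e" .
    qed
    also have "\<dots> = Z r a b"
      unfolding Z_def Cn_def[symmetric] by (subst CY, rule red_ident_tensor) (use fC in auto)
    finally show "red ?d (Cn n r) (reloc n ?SP) (Xs r) a b = Z r a b" .
  qed
  define RR where "RR j = tensor_copies n (\<lambda>_. R j)" for j
  define Z2 where "Z2 j = red ?d (LL (Yf {..<n}) (Xf {..<n}) j - Yf {..<n} j) (RR j) (ptrace ?d (Yf {..<n} j) (Xs j))" for j
  have Gb: "gstrat ?d r (Yf {n}) (Xf {n}) Z2"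
    unfolding Z2_def
    by (rule gstrat_red[OF r1 wf_YX wf_YX sepB _ RR_gstrat[OF r1 Rg, of n, folded RR_def]]) (use Xs in \<open>simp_all add: fam_un2\<close>)
  have Gw: "gstrat ?d r (Yf {..<1}) (Xf {..<1}) (\<lambda>j. relab (swc n) (Z2 j))"
    using iv.gstrat_relab[OF Gb] unfolding Yf_swc_back Xf_swc_back by (simp add: lessThan_Suc)
  have SY: "strategy ?d r 1 (relab (swc n) (Z2 r))" by (rule strat_from_gstrat[OF Gw r1])
  have fL: "finite (Lab n r - Yf {..<n} r)" "finite (Yf {..<n} r)" using Lab_fin wf_finite[OF wf_YX[of "{..<n}"] rr] by auto
  have LY: "Lab n r = (Lab n r - Yf {..<n} r) \<union> Yf {..<n} r"
    unfolding Lab_LL using LL_sub[of r r "Yf {..<n}" "Xf {..<n}"] r1 by auto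
  have TCe: "op_eq ?d (Lab n r) (tensor_copies n (\<lambda>_. ?SP)) (ident_tensor (Yf {..<n} r) (RR r))"
    using TC_cong_basis[OF RS, of n] unfolding RR_def TC_ident .
  have eqB: "op_eq ?d (Cn n r) (red ?d (Lab n r) (tensor_copies n (\<lambda>_. ?SP)) (Xs r)) (Z2 r)"
  proof (unfold op_eq_def, intro ballI)
    fix c e
    have "red ?d (Lab n r) (tensor_copies n (\<lambda>_. ?SP)) (Xs r) c e = red ?d (Lab n r) (ident_tensor (Yf {..<n} r) (RR r)) (Xs r) c e"
      by (rule red_cong) (use TCe in \<open>simp add: op_eq_def\<close>)
    also have "\<dots> = Z2 r c e"
      unfolding Z2_def Lab_LL[symmetric] by (subst LY, rule red_ident_tensor) (use fL in auto)
    finally show "red ?d (Lab n r) (tensor_copies n (\<lambda>_. ?SP)) (Xs r) c e = Z2 r c e" .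
  qed
  have partB: "(\<Sum>s<t. complex_of_real (vals s) * inner_op ?d (Cn n r) (reloc n (P s)) (red ?d (Lab n r) (tensor_copies n (\<lambda>_. ?SP)) (Xs r)))
     = V1 ?d r t vals P (relab (swc n) (Z2 r))"
  proof -
    have "inner_op ?d (Cn n r) (reloc n (P s)) (red ?d (Lab n r) (tensor_copies n (\<lambda>_. ?SP)) (Xs r))
        = inner_op ?d (Cn n r) (reloc n (P s)) (Z2 r)" for s by (rule inner_cong[OF eqB])
    then show ?thesis unfolding V1_def inner_reloc by simp
  qed
  show ?thesis
    using SX' SY unfolding SnX unfolding DEC partA partB by blast
qed


lemma relab_reloc: "op_eq (dimf dx dy) (Lab 1 r) (relab (swc n) (reloc n M)) M"
proof -
  interpret iv: invol "swc n" "dimf dx dy" by (rule invol_swc)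
  show ?thesis unfolding op_eq_def
  proof (intro ballI)
    fix a b assume a: "a \<in> basis (dimf dx dy) (Lab 1 r)" and b: "b \<in> basis (dimf dx dy) (Lab 1 r)"
    have a': "a \<circ> swc n \<in> basis (dimf dx dy) (Cn n r)" unfolding Cn_img[symmetric] iv.basis_img using a by simp
    have b': "b \<circ> swc n \<in> basis (dimf dx dy) (Cn n r)" unfolding Cn_img[symmetric] iv.basis_img using b by simp
    show "relab (swc n) (reloc n M) a b = M a b"
      unfolding relab_def reloc_def loc_swc[OF a' Cn_U] loc_swc[OF b' Cn_U] by simp
  qed
qed

lemma inner_reloc2: "inner_op (dimf dx dy) (Cn n r) (reloc n A) (reloc n B) = inner_op (dimf dx dy) (Lab 1 r) A B"
  unfolding inner_reloc by (rule inner_cong[OF relab_reloc])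

lemma PRODVAL:
  assumes r1: "1 \<le> r" and Rg: "gstrat (dimf dx dy) r (Xf {0}) (SYf {0}) R"
    and RS: "op_eq (dimf dx dy) (Lab 1 r) (\<lambda>a b. \<Sum>s<t. P s a b) (ident_tensor (Yf {0} r) (R r))"
    and Y: "strategy (dimf dx dy) r 1 Y"
  shows "\<exists>X. strategy (dimf dx dy) r m X \<and> Sn (dimf dx dy) r t vals P m X = of_nat m * V1 (dimf dx dy) r t vals P Y"
proof -
  let ?d = "dimf dx dy"
  let ?SP = "\<lambda>a b. \<Sum>s<t. P s a b"
  obtain Ys where Ys1: "gstrat ?d r (Yf {..<1}) (Xf {..<1}) Ys" and YY: "op_eq ?d (Lab 1 r) (Ys r) Y"
    using Y unfolding strategy_iff by blast
  have Ys0: "gstrat ?d r (Yf {0}) (Xf {0}) Ys" using Ys1 by (simp add: lessThan_Suc)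
  define Xp where "Xp n j = tensor_copies n (\<lambda>_. Ys j)" for n j
  have Gp: "gstrat ?d r (Yf {..<n}) (Xf {..<n}) (Xp n)" for n
    unfolding Xp_def by (rule gstrat_prod[OF r1 Yf_un Xf_un Yf_swc Xf_swc Yf_U Xf_U wf_YX Ys0])
  have VY: "V1 ?d r t vals P Y = V1 ?d r t vals P (Ys r)"
    unfolding V1_def using inner_cong[OF op_eq_sym[OF YY]] by simp
  have Rg': "gstrat ?d r (Xf {0}) (shiftY (Yf {0})) R" using Rg by (simp add: SYf_def)
  have L1: "Lab 1 r = LL (Yf {0}) (Xf {0}) r" by (simp add: Lab_LL lessThan_Suc)
  have N1: "inner_op ?d (Lab 1 r) ?SP (Ys r) = 1"
    unfolding inner_cong1[OF RS] unfolding L1 by (rule NORM[OF r1 wf_YX Ys0 Rg']) simp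
  have Nn: "inner_op ?d (Lab n r) (tensor_copies n (\<lambda>_. ?SP)) (Xp n r) = 1" for n
  proof -
    have TCe: "op_eq ?d (Lab n r) (tensor_copies n (\<lambda>_. ?SP)) (ident_tensor (Yf {..<n} r) (tensor_copies n (\<lambda>_. R r)))"
      using TC_cong_basis[OF RS, of n] unfolding TC_ident .
    show ?thesis unfolding inner_cong1[OF TCe] unfolding Lab_LL
      by (rule NORM[OF r1 wf_YX Gp RR_gstrat[OF r1 Rg]]) simp
  qed
  have U: "Lab n r \<subseteq> Ucp {..<n}" "Cn n r \<inter> Ucp {..<n} = {}" for n using Lab_U Cn_U2 by auto
  have main: "Sn ?d r t vals P n (Xp n r) = of_nat n * V1 ?d r t vals P (Ys r)" for n
  proof (induction n)
    case 0 then show ?case by (simp add: Sn_0)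
  next
    case (Suc n)
    have XpS: "Xp (Suc n) r = tens (Ucp {..<n}) (Xp n r) (reloc n (Ys r))"
      unfolding Xp_def tensor_copies_Suc ..
    have e1: "op_eq ?d (Lab n r) (red ?d (Cn n r) (reloc n ?SP) (Xp (Suc n) r)) (Xp n r)"
      unfolding op_eq_def XpS
      using N1 by (simp add: red_tens1[OF U] inner_reloc2)
    have e2: "op_eq ?d (Cn n r) (red ?d (Lab n r) (tensor_copies n (\<lambda>_. ?SP)) (Xp (Suc n) r)) (reloc n (Ys r))"
      unfolding op_eq_def XpS
      by (simp add: red_tens2[OF U] Nn[unfolded Xp_def] Xp_def)
    have "Sn ?d r t vals P (Suc n) (Xp (Suc n) r) = Sn ?d r t vals P n (Xp n r)
       + (\<Sum>s<t. complex_of_real (vals s) * inner_op ?d (Cn n r) (reloc n (P s)) (reloc n (Ys r)))"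
      unfolding DEC Sn_cong[OF e1] inner_cong[OF e2] ..
    also have "\<dots> = of_nat n * V1 ?d r t vals P (Ys r) + V1 ?d r t vals P (Ys r)"
      unfolding Suc.IH V1_def inner_reloc2 ..
    finally show ?case by (simp add: algebra_simps)
  qed
  show ?thesis using strat_from_gstrat[OF Gp r1] main VY by metis
qed


lemma Sup_eq_dom:
  fixes A B :: "real set"
  assumes "\<And>x. x \<in> A \<Longrightarrow> \<exists>y\<in>B. x \<le> y" "\<And>y. y \<in> B \<Longrightarrow> \<exists>x\<in>A. y \<le> x"
  shows "Sup A = Sup B"
proof -
  have "(\<lambda>z. \<forall>x\<in>A. x \<le> z) = (\<lambda>z. \<forall>y\<in>B. y \<le> z)"
    using assms by (auto simp: fun_eq_iff) (meson order_trans)+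
  then show ?thesis unfolding Sup_real_def by simp
qed

lemma lhs_form:
  "Re (\<Sum>i\<in>PiE {..<n} (\<lambda>_. {..<t}). complex_of_real ((\<Sum>k<n. vals (i k)) / real n) *
      inner_op d (Lab n r) (tensor_copies n (\<lambda>k. P (i k))) X) = Re (Sn d r t vals P n X) / real n"
proof -
  have "(\<Sum>i\<in>PiE {..<n} (\<lambda>_. {..<t}). complex_of_real ((\<Sum>k<n. vals (i k)) / real n) *
      inner_op d (Lab n r) (tensor_copies n (\<lambda>k. P (i k))) X) = Sn d r t vals P n X / complex_of_real (real n)"
    unfolding Sn_def sum_divide_distrib by (intro sum.cong refl) (simp add: sum_divide_distrib[symmetric])
  then show ?thesis by (simp add: Re_divide_of_real)
qed


theorem mainTheorem1:
  fixes r t n :: nat and dx dy :: "nat \<Rightarrow> nat" and vals :: "nat \<Rightarrow> real"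
    and P :: "nat \<Rightarrow> lab op"
  assumes "1 \<le> r" and "1 \<le> t" and "1 \<le> n"
    and "\<forall>j\<in>{1..r}. 1 \<le> dx j \<and> 1 \<le> dy j"
    and "verifier (dimf dx dy) r t P"
  shows "Sup {Re (\<Sum>i\<in>PiE {..<n} (\<lambda>_. {..<t}).
                   complex_of_real ((\<Sum>k<n. vals (i k)) / real n) *
                   inner_op (dimf dx dy) (Lab n r) (tensor_copies n (\<lambda>k. P (i k))) X)
          | X. strategy (dimf dx dy) r n X}
       = Sup {Re (\<Sum>i<t. complex_of_real (vals i) * inner_op (dimf dx dy) (Lab 1 r) (P i) X)
          | X. strategy (dimf dx dy) r 1 X}"
proof -
  let ?d = "dimf dx dy"
  let ?V = "\<lambda>Y. Re (V1 ?d r t vals P Y)"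
  have r1: "1 \<le> r" using assms(1) .
  obtain R where Rg: "gstrat ?d r (Xf {0}) (SYf {0}) R"
    and RS0: "op_eq ?d (LL (Yf {0}) (Xf {0}) r) (\<lambda>a b. \<Sum>i<t. P i a b) (ident_tensor (Yf {0} r) (R r))"
    using verifier_gstrat[OF r1 assms(5)] by blast
  have RS: "op_eq ?d (Lab 1 r) (\<lambda>a b. \<Sum>s<t. P s a b) (ident_tensor (Yf {0} r) (R r))"
    using RS0 by (simp add: Lab_LL lessThan_Suc)
  have UP: "\<And>X. strategy ?d r (Suc k) X \<Longrightarrow> \<exists>Y. strategy ?d r 1 Y \<and> Re (Sn ?d r t vals P (Suc k) X) / real (Suc k) \<le> ?V Y" for k
  proof (induction k)
    case 0
    obtain X' Y where "strategy ?d r 1 Y" "Sn ?d r t vals P 1 X = Sn ?d r t vals P 0 X' + V1 ?d r t vals P Y"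
      using STEP[where vals=vals, OF r1 Rg RS 0] by auto
    then show ?case by (auto simp: Sn_0)
  next
    case (Suc k)
    obtain X' Y2 where X': "strategy ?d r (Suc k) X'" and Y2: "strategy ?d r 1 Y2"
      and e: "Sn ?d r t vals P (Suc (Suc k)) X = Sn ?d r t vals P (Suc k) X' + V1 ?d r t vals P Y2"
      using STEP[where vals=vals, OF r1 Rg RS Suc.prems] by blast
    obtain Y1 where Y1: "strategy ?d r 1 Y1" and le: "Re (Sn ?d r t vals P (Suc k) X') / real (Suc k) \<le> ?V Y1"
      using Suc.IH[OF X'] by blast
    define M where "M = max (?V Y1) (?V Y2)"
    have le1: "Re (Sn ?d r t vals P (Suc k) X') / real (Suc k) \<le> M" using le unfolding M_def by linarith
    have le2: "Re (Sn ?d r t vals P (Suc k) X') \<le> real (Suc k) * M"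
      using le1 by (simp add: pos_divide_le_eq mult.commute del: of_nat_Suc)
    have "Re (Sn ?d r t vals P (Suc (Suc k)) X) \<le> real (Suc (Suc k)) * M"
      unfolding e using le2 unfolding M_def by (simp add: algebra_simps)
    then have "Re (Sn ?d r t vals P (Suc (Suc k)) X) / real (Suc (Suc k)) \<le> M"
      by (simp add: field_simps)
    moreover have "\<exists>Y. strategy ?d r 1 Y \<and> ?V Y = M" unfolding M_def using Y1 Y2 by (auto simp: max_def)
    ultimately show ?case by metis
  qed
  obtain k where nk: "n = Suc k" using assms(3) by (cases n) auto
  have n0: "real n > 0" using assms(3) by simp
  have A_eq: "{Re (\<Sum>i\<in>PiE {..<n} (\<lambda>_. {..<t}). complex_of_real ((\<Sum>k<n. vals (i k)) / real n) *
                   inner_op ?d (Lab n r) (tensor_copies n (\<lambda>k. P (i k))) X) | X. strategy ?d r n X}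
      = {Re (Sn ?d r t vals P n X) / real n | X. strategy ?d r n X}"
    by (simp only: lhs_form)
  have B_eq: "{Re (\<Sum>i<t. complex_of_real (vals i) * inner_op ?d (Lab 1 r) (P i) X) | X. strategy ?d r 1 X}
      = {?V X | X. strategy ?d r 1 X}"
    by (simp only: V1_def)
  show ?thesis unfolding A_eq B_eq
  proof (rule Sup_eq_dom)
    fix x assume "x \<in> {Re (Sn ?d r t vals P n X) / real n | X. strategy ?d r n X}"
    then obtain X where X: "strategy ?d r n X" and x: "x = Re (Sn ?d r t vals P n X) / real n" by blast
    obtain Y where "strategy ?d r 1 Y" "x \<le> ?V Y" using UP[of k X] X x nk by blast
    then show "\<exists>y\<in>{?V X | X. strategy ?d r 1 X}. x \<le> y" by blast
  next
    fix y assume "y \<in> {?V X | X. strategy ?d r 1 X}"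
    then obtain Y where Y: "strategy ?d r 1 Y" and y: "y = ?V Y" by blast
    obtain X where X: "strategy ?d r n X" and e: "Sn ?d r t vals P n X = of_nat n * V1 ?d r t vals P Y"
      using PRODVAL[where vals=vals and m=n, OF r1 Rg RS Y] by blast
    have "y = Re (Sn ?d r t vals P n X) / real n" unfolding e y using n0 by simp
    then show "\<exists>x\<in>{Re (Sn ?d r t vals P n X) / real n | X. strategy ?d r n X}. y \<le> x" using X by blast
  qed
qed


end
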